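(* Let $\mathsf{G}$ be a global type. If $\mathsf{G}$ is projectable, then its event structure $\mathcal{S}(\mathsf{G})$ is semantically projectable.
   Context: Participants are ranged over by $\mathsf{p},\mathsf{q},\mathsf{r},\mathsf{s}$ and message labels by $\lambda$. Global types are defined coinductively (and assumed regular, i.e. with finitely many distinct subtrees): $\mathsf{G} ::= \mathsf{p}\to\mathsf{q}:\{\lambda_i;\mathsf{G}_i\}_{i\in I} \mid \mathsf{End}$, with $I$ finite non-empty and the $\lambda_i$ pairwise distinct. Processes (coinductive): $P ::= \bigoplus_{i\in I}\mathsf{p}!\lambda_i;P_i \mid \sum_{i\in I}\mathsf{p}?\lambda_i;P_i \mid \mathbf{0}$. A communication is $\alpha=\mathsf{p}\mathsf{q}\lambda$ with $\mathrm{part}(\mathsf{p}\mathsf{q}\lambda)=\{\mathsf{p},\mathsf{q}\}$; a trace is a finite sequence of communications, $\mathrm{part}$ extended to traces by union. $\mathrm{Tr}(\mathsf{End})=\emptyset$, $\mathrm{Tr}(\mathsf{p}\to\mathsf{q}:\{\lambda_i;\mathsf{G}_i\}_{i\in I})=\{\mathsf{p}\mathsf{q}\lambda_i\cdot\sigma\mid i\in I,\ \sigma=\epsilon\text{ or }\sigma\in\mathrm{Tr}(\mathsf{G}_i)\}$, and $\mathrm{part}(\mathsf{G})=\bigcup_{\sigma\in\mathrm{Tr}(\mathsf{G})}\mathrm{part}(\sigma)$. Projection (coinductive, partial): $\mathsf{G}\upharpoonright\mathsf{r}=\mathbf{0}$ if $\mathsf{r}\notin\mathrm{part}(\mathsf{G})$;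 for $\mathsf{G}=\mathsf{p}\to\mathsf{q}:\{\lambda_i;\mathsf{G}_i\}_{i\in I}$: $\mathsf{G}\upharpoonright\mathsf{r}=\sum_{i\in I}\mathsf{p}?\lambda_i;(\mathsf{G}_i\upharpoonright\mathsf{r})$ if $\mathsf{r}=\mathsf{q}$; $=\bigoplus_{i\in I}\mathsf{q}!\lambda_i;(\mathsf{G}_i\upharpoonright\mathsf{r})$ if $\mathsf{r}=\mathsf{p}$; $=\mathsf{G}_1\upharpoonright\mathsf{r}$ if $\mathsf{r}\notin\{\mathsf{p},\mathsf{q}\}$, $\mathsf{r}\in\mathrm{part}(\mathsf{G}_1)$ and $\mathsf{G}_i\upharpoonright\mathsf{r}=\mathsf{G}_1\upharpoonright\mathsf{r}$ for all $i\in I$; undefined otherwise. $\mathsf{G}$ is projectable if $\mathsf{G}\upharpoonright\mathsf{p}$ is defined for all $\mathsf{p}$. Projection of a trace on $\mathsf{r}$: $\epsilon\upharpoonright\mathsf{r}=\epsilon$; $(\mathsf{p}\mathsf{q}\lambda\cdot\sigma)\upharpoonright\mathsf{r}$ equals $\mathsf{q}!\lambda\cdot(\sigma\upharpoonright\mathsf{r})$ if $\mathsf{r}=\mathsf{p}$, $\mathsf{p}?\lambda\cdot(\sigma\upharpoonright\mathsf{r})$ if $\mathsf{r}=\mathsf{q}$, and $\sigma\upharpoonright\mathsf{r}$ otherwise. Event structure of $\mathsf{G}$: permutation equivalence $\sim$ is the least equivalence on traces with $\sigma\cdot\alpha\cdot\alpha'\cdot\sigma'\sim\sigma\cdot\alpha'\cdot\alpha\cdot\sigma'$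 whenever $\mathrm{part}(\alpha)\cap\mathrm{part}(\alpha')=\emptyset$; $[\sigma]$ is the class of $\sigma$. A non-empty trace $\sigma=\sigma[1]\cdots\sigma[n]$ is pointed if for every $1\le i<n$ there is $j$ with $i<j\le n$ and $\mathrm{part}(\sigma[i])\cap\mathrm{part}(\sigma[j])\ne\emptyset$. A g-event is $[\sigma]$ with $\sigma$ pointed; its communication $\mathrm{cm}([\sigma])$ is the last element of $\sigma$ (independent of the representative). Causal prefixing: $\alpha\circ[\sigma]=[\alpha\cdot\sigma]$ if $\mathrm{part}(\alpha)\cap\mathrm{part}(\sigma)\ne\emptyset$, $=[\sigma]$ otherwise; $\epsilon\circ\gamma=\gamma$, $(\alpha\cdot\sigma)\circ\gamma=\alpha\circ(\sigma\circ\gamma)$. $\mathrm{ev}(\sigma\cdot\alpha)=\sigma\circ[\alpha]$. Causality: $\gamma\le\gamma'$ if $\gamma=[\sigma]$ and $\gamma'=[\sigma\cdot\sigma']$ for some $\sigma,\sigma'$. Conflict: $\gamma\#\gamma'$ if $\gamma=[\sigma\cdot\mathsf{p}\mathsf{q}\lambda_1\cdot\sigma_1]$, $\gamma'=[\sigma\cdot\mathsf{p}\mathsf{q}\lambda_2\cdot\sigma_2]$ with $\lambda_1\ne\lambda_2$. $\mathcal{S}(\mathsf{G})=(\mathcal{E}(\mathsf{G}),\le_{\mathsf{G}},\#_{\mathsf{G}})$ with $\mathcal{E}(\mathsf{G})=\{\mathrm{ev}(\sigma)\mid\sigma\in\mathrm{Tr}(\mathsf{G})\}$ and the relations restricted to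 $\mathcal{E}(\mathsf{G})$. Two events $\gamma_1,\gamma_2\in\mathcal{E}(\mathsf{G})$ are in initial conflict if $\gamma_1=[\sigma\cdot\mathsf{p}\mathsf{q}\lambda_1]$ and $\gamma_2=[\sigma\cdot\mathsf{p}\mathsf{q}\lambda_2]$ for some $\sigma,\mathsf{p},\mathsf{q}$ and $\lambda_1\ne\lambda_2$. $\mathcal{S}(\mathsf{G})$ is semantically projectable if for all $\gamma_1,\gamma_2\in\mathcal{E}(\mathsf{G})$ in initial conflict the following holds: whenever there is $\gamma_1'=[\sigma_1\cdot\alpha_1]\in\mathcal{E}(\mathsf{G})$ with $\gamma_1\le_{\mathsf{G}}\gamma_1'$ and a participant $\mathsf{r}\in\mathrm{part}(\alpha_1)\setminus\mathrm{part}(\mathrm{cm}(\gamma_1))$, there is $\gamma_2'=[\sigma_2\cdot\alpha_2]\in\mathcal{E}(\mathsf{G})$ with $\gamma_2\le_{\mathsf{G}}\gamma_2'$, $\alpha_2=\alpha_1$ and $\sigma_2\upharpoonright\mathsf{r}=\sigma_1\upharpoonright\mathsf{r}$. *)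

theory Defs
  imports Main
begin

text \<open>A global type p -> q : {l_i ; G_i}_{i in I} is represented by
  Com p q bs where bs is the list of branches (l_i, G_i).\<close>

codatatype ('p, 'l) gty = End | Com 'p 'p "('l \<times> ('p, 'l) gty) list"

coinductive wf_gty :: "('p, 'l) gty \<Rightarrow> bool" where
  "wf_gty End"
| "bs \<noteq> [] \<Longrightarrow> distinct (map fst bs) \<Longrightarrow> p \<noteq> q \<Longrightarrow>
   (\<forall>b \<in> set bs. wf_gty (snd b)) \<Longrightarrow> wf_gty (Com p q bs)"

inductive_set subtrees :: "('p, 'l) gty \<Rightarrow> ('p, 'l) gty set" for G where
  "G \<in> subtrees G"
| "Com p q bs \<in> subtrees G \<Longrightarrow> b \<in> set bs \<Longrightarrow> snd b \<in> subtrees G"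

definition regular :: "('p, 'l) gty \<Rightarrow> bool" where
  "regular G \<longleftrightarrow> finite (subtrees G)"

type_synonym ('p, 'l) comm = "'p \<times> 'p \<times> 'l"
type_synonym ('p, 'l) trace = "('p, 'l) comm list"

fun partc :: "('p, 'l) comm \<Rightarrow> 'p set" where
  "partc (p, q, l) = {p, q}"

definition partt :: "('p, 'l) trace \<Rightarrow> 'p set" where
  "partt \<sigma> = (\<Union>a \<in> set \<sigma>. partc a)"

inductive is_trace :: "('p, 'l) gty \<Rightarrow> ('p, 'l) trace \<Rightarrow> bool" where
  "(l, G') \<in> set bs \<Longrightarrow> is_trace (Com p q bs) [(p, q, l)]"
| "(l, G') \<in> set bs \<Longrightarrow> is_trace G' \<sigma> \<Longrightarrow> is_trace (Com p q bs) ((p, q, l) # \<sigma>)"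

definition Tr :: "('p, 'l) gty \<Rightarrow> ('p, 'l) trace set" where
  "Tr G = {\<sigma>. is_trace G \<sigma>}"

definition partg :: "('p, 'l) gty \<Rightarrow> 'p set" where
  "partg G = (\<Union>\<sigma> \<in> Tr G. partt \<sigma>)"

codatatype ('p, 'l) proc =
    Send 'p "('l \<times> ('p, 'l) proc) list"
  | Recv 'p "('l \<times> ('p, 'l) proc) list"
  | Nil

text \<open>The coinductive partial projection function is rendered as a coinductive
  relation: proj G r P means G restricted to r is defined and equals P.\<close>

coinductive proj :: "('p, 'l) gty \<Rightarrow> 'p \<Rightarrow> ('p, 'l) proc \<Rightarrow> bool" where
  proj_out: "r \<notin> partg G \<Longrightarrow> proj G r Nil"
| proj_recv: "r \<in> partg (Com p q bs) \<Longrightarrow> r = q \<Longrightarrow>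
     list_all2 (\<lambda>b c. fst b = fst c \<and> proj (snd b) r (snd c)) bs cs \<Longrightarrow>
     proj (Com p q bs) r (Recv p cs)"
| proj_send: "r \<in> partg (Com p q bs) \<Longrightarrow> r = p \<Longrightarrow> r \<noteq> q \<Longrightarrow>
     list_all2 (\<lambda>b c. fst b = fst c \<and> proj (snd b) r (snd c)) bs cs \<Longrightarrow>
     proj (Com p q bs) r (Send q cs)"
| proj_skip: "r \<notin> {p, q} \<Longrightarrow> bs \<noteq> [] \<Longrightarrow> r \<in> partg (snd (hd bs)) \<Longrightarrow>
     (\<forall>b \<in> set bs. proj (snd b) r P) \<Longrightarrow> proj (Com p q bs) r P"

definition projectable :: "('p, 'l) gty \<Rightarrow> bool" where
  "projectable G \<longleftrightarrow> (\<forall>r. \<exists>P. proj G r P)"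

datatype ('p, 'l) act = Out 'p 'l | In 'p 'l

fun projt :: "('p, 'l) trace \<Rightarrow> 'p \<Rightarrow> ('p, 'l) act list" where
  "projt [] r = []"
| "projt ((p, q, l) # \<sigma>) r =
     (if r = p then Out q l # projt \<sigma> r
      else if r = q then In p l # projt \<sigma> r
      else projt \<sigma> r)"

inductive swap :: "('p, 'l) trace \<Rightarrow> ('p, 'l) trace \<Rightarrow> bool" where
  "partc a \<inter> partc a' = {} \<Longrightarrow> swap (\<sigma> @ a # a' # \<sigma>') (\<sigma> @ a' # a # \<sigma>')"

text \<open>swap is symmetric, so its reflexive transitive closure is the least
  equivalence containing it.\<close>
definition perm_eq :: "('p, 'l) trace \<Rightarrow> ('p, 'l) trace \<Rightarrow> bool" where
  "perm_eq = (swap\<^sup>*\<^sup>*)"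

definition cls :: "('p, 'l) trace \<Rightarrow> ('p, 'l) trace set" where
  "cls \<sigma> = {\<tau>. perm_eq \<sigma> \<tau>}"

definition pointed :: "('p, 'l) trace \<Rightarrow> bool" where
  "pointed \<sigma> \<longleftrightarrow> \<sigma> \<noteq> [] \<and>
     (\<forall>i. Suc i < length \<sigma> \<longrightarrow>
        (\<exists>j. i < j \<and> j < length \<sigma> \<and> partc (\<sigma> ! i) \<inter> partc (\<sigma> ! j) \<noteq> {}))"

definition cm :: "('p, 'l) trace set \<Rightarrow> ('p, 'l) comm" where
  "cm \<gamma> = last (SOME \<sigma>. \<sigma> \<in> \<gamma> \<and> pointed \<sigma>)"

text \<open>Causal prefixing, computed on representatives:
  cpre \<sigma> \<tau> is a representative of \<sigma> \<circ> [\<tau>].\<close>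
fun cpre :: "('p, 'l) trace \<Rightarrow> ('p, 'l) trace \<Rightarrow> ('p, 'l) trace" where
  "cpre [] \<tau> = \<tau>"
| "cpre (a # \<sigma>) \<tau> =
     (let \<tau>' = cpre \<sigma> \<tau> in if partc a \<inter> partt \<tau>' \<noteq> {} then a # \<tau>' else \<tau>')"

definition ev :: "('p, 'l) trace \<Rightarrow> ('p, 'l) trace set" where
  "ev \<sigma> = cls (cpre (butlast \<sigma>) [last \<sigma>])"

definition events :: "('p, 'l) gty \<Rightarrow> ('p, 'l) trace set set" where
  "events G = {ev \<sigma> | \<sigma>. \<sigma> \<in> Tr G}"

definition causal :: "('p, 'l) trace set \<Rightarrow> ('p, 'l) trace set \<Rightarrow> bool" where
  "causal \<gamma> \<gamma>' \<longleftrightarrow> (\<exists>\<sigma> \<sigma>'. \<gamma> = cls \<sigma> \<and> \<gamma>' = cls (\<sigma> @ \<sigma>'))"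

definition initial_conflict :: "('p, 'l) gty \<Rightarrow> ('p, 'l) trace set \<Rightarrow> ('p, 'l) trace set \<Rightarrow> bool" where
  "initial_conflict G \<gamma>1 \<gamma>2 \<longleftrightarrow> \<gamma>1 \<in> events G \<and> \<gamma>2 \<in> events G \<and>
     (\<exists>\<sigma> p q l1 l2. l1 \<noteq> l2 \<and> \<gamma>1 = cls (\<sigma> @ [(p, q, l1)]) \<and> \<gamma>2 = cls (\<sigma> @ [(p, q, l2)]))"

definition sem_projectable :: "('p, 'l) gty \<Rightarrow> bool" where
  "sem_projectable G \<longleftrightarrow>
    (\<forall>\<gamma>1 \<gamma>2. initial_conflict G \<gamma>1 \<gamma>2 \<longrightarrow>
      (\<forall>\<sigma>1 \<alpha>1 r. cls (\<sigma>1 @ [\<alpha>1]) \<in> events G \<and> causal \<gamma>1 (cls (\<sigma>1 @ [\<alpha>1])) \<and>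
          r \<in> partc \<alpha>1 - partc (cm \<gamma>1) \<longrightarrow>
        (\<exists>\<sigma>2. cls (\<sigma>2 @ [\<alpha>1]) \<in> events G \<and> causal \<gamma>2 (cls (\<sigma>2 @ [\<alpha>1])) \<and>
           projt \<sigma>2 r = projt \<sigma>1 r)))"

end

theory Submission
  imports Defs "HOL-Library.Sublist"
begin


definition act :: "('p,'l) comm \<Rightarrow> 'p \<Rightarrow> ('p,'l) act" where
  "act c s = (case c of (p,q,l) \<Rightarrow> if s = p then Out q l else In p l)"

fun partner :: "('p,'l) act \<Rightarrow> 'p" where
  "partner (Out p l) = p" | "partner (In p l) = p"

definition cmpr :: "'a list \<Rightarrow> 'a list \<Rightarrow> bool" where
  "cmpr x y \<longleftrightarrow> prefix x y \<or> prefix y x"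

lemma projt_append[simp]: "projt (xs @ ys) r = projt xs r @ projt ys r"
  by (induction xs r rule: projt.induct) auto

lemma projt_cons: "projt (c # w) s = (if s \<in> partc c then act c s # projt w s else projt w s)"
  by (cases c) (auto simp: act_def)

lemma projt_single: "projt [c] s = (if s \<in> partc c then [act c s] else [])"
  by (simp add: projt_cons)

lemma partt_simps[simp]: "partt [] = {}" "partt (a#w) = partc a \<union> partt w"
  "partt (xs@ys) = partt xs \<union> partt ys"
  by (auto simp: partt_def)

lemma partc_ne: "partc c \<noteq> {}" by (cases c) auto
lemma finite_partc: "finite (partc c)" by (cases c) auto
lemma finite_partt: "finite (partt w)" by (induction w) (auto simp: finite_partc)

lemma projt_empty_iff: "projt w s = [] \<longleftrightarrow> s \<notin> partt w"
  by (induction w) (auto simp: projt_cons)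

lemma act_in_proj: "x \<in> set (projt w s) \<Longrightarrow> \<exists>e\<in>set w. s \<in> partc e \<and> act e s = x"
  by (induction w) (auto simp: projt_cons split: if_splits)

lemma act_inj: "s \<in> partc c \<Longrightarrow> s \<in> partc e \<Longrightarrow> act c s = act e s \<Longrightarrow> c = e"
  by (cases c; cases e) (auto simp: act_def split: if_splits)

lemma partner_act2: "s \<in> partc e \<Longrightarrow> d \<in> partc e \<Longrightarrow> s \<noteq> d \<Longrightarrow> partner (act e s) = d"
  by (cases e) (auto simp: act_def)

lemma partner_act: "s \<in> partc e \<Longrightarrow> partner (act e s) \<in> partc e"
  by (cases e) (auto simp: act_def)

lemma act_Out: "u \<in> partc c \<Longrightarrow> act c u = Out v l \<Longrightarrow> c = (u,v,l)"
  by (cases c) (auto simp: act_def split: if_splits)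

lemma act_In: "u \<in> partc c \<Longrightarrow> act c u = In v l \<Longrightarrow> c = (v,u,l) \<and> v \<noteq> u"
  by (cases c) (auto simp: act_def split: if_splits)

lemma partner_iff: "s \<in> partc c \<Longrightarrow> s \<noteq> t \<Longrightarrow> (partner (act c s) = t \<longleftrightarrow> partc c = {s,t})"
  by (cases c) (auto simp: act_def doubleton_eq_iff)

lemma filter_partner:
  "s \<noteq> t \<Longrightarrow> filter (\<lambda>x. partner x = t) (projt w s) = map (\<lambda>c. act c s) (filter (\<lambda>c. partc c = {s,t}) w)"
proof (induction w)
  case Nil then show ?case by simp
next
  case (Cons c w)
  show ?case
  proof (cases "s \<in> partc c")
    case True then show ?thesis using Cons by (auto simp: projt_cons partner_iff)
  next
    case False
    then have "partc c \<noteq> {s,t}" by auto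
    then show ?thesis using Cons False by (simp add: projt_cons)
  qed
qed

lemma cnt_partner:
  "s \<noteq> t \<Longrightarrow> length (filter (\<lambda>x. partner x = t) (projt w s)) = length (filter (\<lambda>c. partc c = {s,t}) w)"
  by (simp add: filter_partner)

lemma prefix_filter_len: "prefix h1 h2 \<Longrightarrow> length (filter P h1) \<le> length (filter P h2)"
  by (auto simp: prefix_def)

lemma prefix_projt: "prefix u w \<Longrightarrow> prefix (projt u s) (projt w s)"
  by (auto simp: prefix_def)

lemma cmpr_sym: "cmpr x y \<Longrightarrow> cmpr y x" by (auto simp: cmpr_def)

lemma cmpr_prefix: "prefix u x \<Longrightarrow> cmpr x z \<Longrightarrow> cmpr u z"
  unfolding cmpr_def using prefix_same_cases prefix_order.trans by blast

lemma cmpr_len: "cmpr x z \<Longrightarrow> length x \<le> length z \<Longrightarrow> prefix x z"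
  unfolding cmpr_def by (metis prefix_length_prefix prefix_order.refl)

lemma pairing:
  assumes st: "s \<noteq> t" "s \<in> partc a" "t \<in> partc a"
    and ps: "prefix (projt (xs@[a]) s) (projt Z s)"
    and ct: "cmpr (projt (xs@[a]) t) (projt Z t)"
  shows "prefix (projt (xs@[a]) t) (projt Z t)"
proof (rule ccontr)
  assume np: "\<not> ?thesis"
  have pa: "partc a = {s,t}" using st by (cases a) auto
  have "prefix (projt Z t) (projt xs t @ [act a t])" using ct np st(3) by (auto simp: cmpr_def projt_single)
  moreover have "projt Z t \<noteq> projt xs t @ [act a t]" using np st(3) by (auto simp: projt_single)
  ultimately have pz: "prefix (projt Z t) (projt xs t)" by (simp add: prefix_snoc)
  let ?C = "\<lambda>w. length (filter (\<lambda>c. partc c = {s,t}) w)"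
  have "?C Z = length (filter (\<lambda>x. partner x = s) (projt Z t))"
    using cnt_partner[of t s Z] st(1) by (simp add: insert_commute)
  also have "\<dots> \<le> length (filter (\<lambda>x. partner x = s) (projt xs t))" by (rule prefix_filter_len[OF pz])
  also have "\<dots> = ?C xs" using cnt_partner[of t s xs] st(1) by (simp add: insert_commute)
  finally have c1: "?C Z \<le> ?C xs" .
  have "?C (xs@[a]) = length (filter (\<lambda>x. partner x = t) (projt (xs@[a]) s))"
    using cnt_partner[of s t "xs@[a]"] st(1) by simp
  also have "\<dots> \<le> length (filter (\<lambda>x. partner x = t) (projt Z s))" by (rule prefix_filter_len[OF ps])
  also have "\<dots> = ?C Z" using cnt_partner[of s t Z] st(1) by simp
  finally have "?C (xs@[a]) \<le> ?C Z" .
  moreover have "?C (xs@[a]) = ?C xs + 1" using pa by simp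
  ultimately show False using c1 by simp
qed



fun cpk :: "'p set \<Rightarrow> ('p,'l) trace \<Rightarrow> 'p set \<Rightarrow> ('p,'l) trace" where
  "cpk S [] T = []"
| "cpk S (a # xs) T = (let A = cpk S xs T in if partc a \<inter> (partt A \<union> T) \<inter> S \<noteq> {} then a # A else A)"

lemma cpre_cpk: "cpre xs \<tau> = cpk UNIV xs (partt \<tau>) @ \<tau>"
  by (induction xs) (auto simp: Let_def)

lemma cpk_sub: "set (cpk S xs T) \<subseteq> set xs"
  by (induction xs) (auto simp: Let_def)

lemma cpk_S: "e \<in> set (cpk S xs T) \<Longrightarrow> partc e \<inter> S \<noteq> {}"
  by (induction xs) (auto simp: Let_def split: if_splits)

lemma cpk_keep: "t \<in> T \<Longrightarrow> t \<in> S \<Longrightarrow> projt (cpk S xs T) t = projt xs t"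
  by (induction xs) (auto simp: Let_def projt_cons)

lemma cpk_prefix: "t \<in> S \<Longrightarrow> prefix (projt (cpk S xs T) t) (projt xs t)"
proof (induction xs)
  case Nil then show ?case by simp
next
  case (Cons a xs)
  let ?A = "cpk S xs T"
  show ?case
  proof (cases "partc a \<inter> (partt ?A \<union> T) \<inter> S \<noteq> {}")
    case True then show ?thesis using Cons by (auto simp: Let_def projt_cons)
  next
    case False
    show ?thesis
    proof (cases "t \<in> partc a")
      case True
      then have "t \<notin> partt ?A" using False Cons.prems by auto
      then have "projt ?A t = []" by (simp add: projt_empty_iff)
      then show ?thesis using False by (simp add: Let_def)
    next
      case False2: False
      then show ?thesis using False Cons by (simp add: Let_def projt_cons)
    qed
  qed
qed

lemma cpk_idem: "cpk S (cpk S xs T) T = cpk S xs T"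
  by (induction xs) (auto simp: Let_def)

lemma partt_cpk_mono: "partt (cpk S xs T) \<subseteq> partt (cpk UNIV xs T)"
proof (induction xs)
  case Nil then show ?case by simp
next
  case (Cons a xs)
  let ?A = "cpk S xs T" and ?B = "cpk UNIV xs T"
  show ?case
  proof (cases "partc a \<inter> (partt ?A \<union> T) \<inter> S \<noteq> {}")
    case True
    then have "partc a \<inter> (partt ?B \<union> T) \<noteq> {}" using Cons.IH by blast
    then show ?thesis using True Cons.IH by (simp add: Let_def) blast
  next
    case False
    then have "cpk S (a#xs) T = ?A" by (simp add: Let_def)
    moreover have "partt ?B \<subseteq> partt (cpk UNIV (a#xs) T)" by (auto simp: Let_def)
    ultimately show ?thesis using Cons.IH by auto
  qed
qed

lemma partt_cpk_cons: "partt (cpk S xs T) \<subseteq> partt (cpk S (a#xs) T)"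
  by (auto simp: Let_def)

lemma cpk_EqN: "D \<inter> partt (cpk UNIV xs T) = {} \<Longrightarrow> D \<inter> T = {} \<Longrightarrow> cpk UNIV xs T = cpk (-D) xs T"
proof (induction xs)
  case Nil then show ?case by simp
next
  case (Cons a xs)
  have d1: "D \<inter> partt (cpk UNIV xs T) = {}" using Cons.prems(1) partt_cpk_cons[of UNIV xs T a] by blast
  then have eq: "cpk UNIV xs T = cpk (-D) xs T" using Cons.IH Cons.prems(2) by blast
  have sub: "partt (cpk UNIV xs T) \<union> T \<subseteq> -D" using d1 Cons.prems(2) by blast
  have iff: "(partc a \<inter> (partt (cpk UNIV xs T) \<union> T) \<inter> UNIV \<noteq> {}) = (partc a \<inter> (partt (cpk (-D) xs T) \<union> T) \<inter> -D \<noteq> {})"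
    using sub eq by auto
  show ?case unfolding cpk.simps Let_def iff eq[symmetric] ..
qed

lemma cpk_DN: "D \<inter> T = {} \<Longrightarrow> D \<inter> partt (cpk UNIV xs T) \<noteq> {} \<Longrightarrow> D \<inter> partt (cpk (-D) xs T) \<noteq> {}"
proof (induction xs)
  case Nil then show ?case by simp
next
  case (Cons a xs)
  show ?case
  proof (cases "D \<inter> partt (cpk UNIV xs T) = {}")
    case False
    then have "D \<inter> partt (cpk (-D) xs T) \<noteq> {}" using Cons.IH Cons.prems(1) by blast
    then show ?thesis using partt_cpk_cons[of "-D" xs T a] by blast
  next
    case True
    have eq: "cpk UNIV xs T = cpk (-D) xs T" using cpk_EqN[OF True Cons.prems(1)] .
    have sub: "partt (cpk UNIV xs T) \<union> T \<subseteq> -D" using True Cons.prems(1) by blast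
    show ?thesis
    proof (cases "partc a \<inter> (partt (cpk UNIV xs T) \<union> T) \<inter> UNIV \<noteq> {}")
      case False
      then have "cpk UNIV (a#xs) T = cpk UNIV xs T" using False unfolding cpk.simps Let_def by (intro if_not_P)
      then show ?thesis using Cons.prems(2) True by simp
    next
      case kept: True
      then have "cpk UNIV (a#xs) T = a # cpk UNIV xs T" using kept unfolding cpk.simps Let_def by (intro if_P)
      then have da: "D \<inter> partc a \<noteq> {}" using Cons.prems(2) True by auto
      have "partc a \<inter> (partt (cpk (-D) xs T) \<union> T) \<inter> -D \<noteq> {}" using kept sub eq by auto
      then have "cpk (-D) (a#xs) T = a # cpk (-D) xs T" using kept unfolding cpk.simps Let_def by (intro if_P)
      then show ?thesis using da by auto
    qed
  qed
qed



lemma projt_Cons2: "projt (c # w) s = projt [c] s @ projt w s"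
  using projt_append[of "[c]" w s] by simp

lemma cpk_prefix2: "t \<in> S \<Longrightarrow> prefix (projt (cpk S xs (partc \<alpha>) @ [\<alpha>]) t) (projt (xs @ [\<alpha>]) t)"
proof (cases "t \<in> partc \<alpha>")
  case True
  assume "t \<in> S"
  then show ?thesis using True by (simp add: cpk_keep)
next
  case False
  assume "t \<in> S"
  then show ?thesis using False cpk_prefix[of t S xs "partc \<alpha>"] by (simp add: projt_single)
qed
lemma old:
  assumes r: "r \<in> partc \<alpha>" "r \<in> S"
    and req: "projt X' r = projt Y' r"
    and cmp: "\<forall>t\<in>S. cmpr (projt (X'@[\<alpha>]) t) (projt (Y'@[\<alpha>]) t)"
  shows "\<forall>t\<in>S. prefix (projt (cpk S X' (partc \<alpha>) @ [\<alpha>]) t) (projt (cpk S Y' (partc \<alpha>) @ [\<alpha>]) t)"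
proof -
  define Z where "Z = cpk S Y' (partc \<alpha>) @ [\<alpha>]"
  have cmpZ: "cmpr (projt (X'@[\<alpha>]) t) (projt Z t)" if "t \<in> S" for t
  proof -
    have "prefix (projt Z t) (projt (Y'@[\<alpha>]) t)" using cpk_prefix2[OF that] by (simp add: Z_def)
    then have "cmpr (projt Z t) (projt (X'@[\<alpha>]) t)" using cmpr_prefix cmpr_sym[OF bspec[OF cmp that]] by blast
    then show ?thesis by (rule cmpr_sym)
  qed
  have cmpP: "cmpr (projt (xs@[a]) t) (projt Z t)" if "xs @ a # ys = X'" "t \<in> S" for xs a ys t
  proof -
    have "prefix (xs@[a]) (X'@[\<alpha>])" using that(1) by (auto simp: prefix_def)
    then have "prefix (projt (xs@[a]) t) (projt (X'@[\<alpha>]) t)" by (rule prefix_projt)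
    then show ?thesis using cmpZ[OF that(2)] by (rule cmpr_prefix)
  qed
  have base: "length (projt X' t) + 1 \<le> length (projt Z t)" if "t \<in> S" "t \<in> partc \<alpha>" for t
  proof (cases "t = r")
    case True
    then have "projt Z t = projt Y' r @ [act \<alpha> r]" using r by (simp add: Z_def cpk_keep projt_single)
    then show ?thesis using req True by simp
  next
    case False
    have "prefix (projt (X'@[\<alpha>]) r) (projt Z r)"
      using r req by (simp add: Z_def cpk_keep projt_single)
    from pairing[OF _ r(1) that(2) this cmpZ[OF that(1)]] False
    have "prefix (projt (X'@[\<alpha>]) t) (projt Z t)" by auto
    from prefix_length_le[OF this] that(2) show ?thesis by (simp add: projt_single)
  qed
  have inv: "\<And>xs. xs @ ys = X' \<Longrightarrow> \<forall>t\<in>S. projt (cpk S ys (partc \<alpha>) @ [\<alpha>]) t \<noteq> [] \<longrightarrow>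
       length (projt xs t) + length (projt (cpk S ys (partc \<alpha>) @ [\<alpha>]) t) \<le> length (projt Z t)" for ys
  proof (induction ys)
    case Nil
    show ?case
    proof (intro ballI impI)
      fix t assume tS: "t \<in> S" and ne: "projt (cpk S [] (partc \<alpha>) @ [\<alpha>]) t \<noteq> []"
      then have ta: "t \<in> partc \<alpha>" by (simp add: projt_single split: if_splits)
      show "length (projt xs t) + length (projt (cpk S [] (partc \<alpha>) @ [\<alpha>]) t) \<le> length (projt Z t)"
        using base[OF tS ta] Nil.prems ta by (simp add: projt_single)
    qed
  next
    case (Cons a ys)
    let ?A = "cpk S ys (partc \<alpha>) @ [\<alpha>]"
    have IH: "\<forall>t\<in>S. projt ?A t \<noteq> [] \<longrightarrow> length (projt (xs@[a]) t) + length (projt ?A t) \<le> length (projt Z t)"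
      using Cons.IH[of "xs@[a]"] Cons.prems by simp
    show ?case
    proof (cases "partc a \<inter> (partt (cpk S ys (partc \<alpha>)) \<union> partc \<alpha>) \<inter> S \<noteq> {}")
      case False
      then have "cpk S (a#ys) (partc \<alpha>) = cpk S ys (partc \<alpha>)" by (simp add: Let_def)
      show ?thesis
      proof (intro ballI impI)
        fix t assume tS: "t \<in> S" and ne: "projt (cpk S (a#ys) (partc \<alpha>) @ [\<alpha>]) t \<noteq> []"
        have "length (projt (xs@[a]) t) + length (projt ?A t) \<le> length (projt Z t)"
          using IH tS ne \<open>cpk S (a#ys) (partc \<alpha>) = cpk S ys (partc \<alpha>)\<close> by simp
        then show "length (projt xs t) + length (projt (cpk S (a#ys) (partc \<alpha>) @ [\<alpha>]) t) \<le> length (projt Z t)"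
          using \<open>cpk S (a#ys) (partc \<alpha>) = cpk S ys (partc \<alpha>)\<close> by simp
      qed
    next
      case True
      then have ceq: "cpk S (a#ys) (partc \<alpha>) = a # cpk S ys (partc \<alpha>)" by (simp add: Let_def)
      from True obtain s where s: "s \<in> partc a" "s \<in> partt ?A" "s \<in> S" by auto
      have sA: "projt ?A s \<noteq> []" using s(2) by (simp add: projt_empty_iff)
      show ?thesis
      proof (intro ballI impI)
        fix t assume tS: "t \<in> S" and ne: "projt (cpk S (a#ys) (partc \<alpha>) @ [\<alpha>]) t \<noteq> []"
        show "length (projt xs t) + length (projt (cpk S (a#ys) (partc \<alpha>) @ [\<alpha>]) t) \<le> length (projt Z t)"
        proof (cases "projt ?A t = []")
          case False
          have "length (projt (xs@[a]) t) + length (projt ?A t) \<le> length (projt Z t)"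
            using IH tS False by blast
          then show ?thesis unfolding ceq by (simp add: projt_cons split: if_splits)
        next
          case True
          then have ta: "t \<in> partc a" using ne ceq by (auto simp: projt_cons split: if_splits)
          have tns: "t \<noteq> s" using True sA by auto
          have "length (projt (xs@[a]) s) + length (projt ?A s) \<le> length (projt Z s)" using IH s(3) sA by blast
          then have "length (projt (xs@[a]) s) \<le> length (projt Z s)" by simp
          then have ps: "prefix (projt (xs@[a]) s) (projt Z s)"
            using cmpr_len[OF cmpP[OF Cons.prems s(3)]] by blast
          have "prefix (projt (xs@[a]) t) (projt Z t)"
            using pairing[OF tns[symmetric] s(1) ta ps cmpP[OF Cons.prems tS]] .
          then have "length (projt (xs@[a]) t) \<le> length (projt Z t)" by (rule prefix_length_le)
          then show ?thesis using True ta unfolding ceq by (simp add: projt_cons)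
        qed
      qed
    qed
  qed
  have fin: "\<forall>t\<in>S. projt (cpk S X' (partc \<alpha>) @ [\<alpha>]) t \<noteq> [] \<longrightarrow>
       length (projt (cpk S X' (partc \<alpha>) @ [\<alpha>]) t) \<le> length (projt Z t)"
    using inv[of "[]" X'] by simp
  show ?thesis
  proof
    fix t assume tS: "t \<in> S"
    have "prefix (projt (cpk S X' (partc \<alpha>) @ [\<alpha>]) t) (projt (X'@[\<alpha>]) t)"
      using cpk_prefix2[OF tS] .
    then have c: "cmpr (projt (cpk S X' (partc \<alpha>) @ [\<alpha>]) t) (projt Z t)"
      using cmpr_prefix[OF _ cmpZ[OF tS]] by blast
    show "prefix (projt (cpk S X' (partc \<alpha>) @ [\<alpha>]) t) (projt (cpk S Y' (partc \<alpha>) @ [\<alpha>]) t)"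
    proof (cases "projt (cpk S X' (partc \<alpha>) @ [\<alpha>]) t = []")
      case True then show ?thesis by simp
    next
      case False
      then show ?thesis using fin tS cmpr_len[OF c] by (simp add: Z_def)
    qed
  qed
qed

lemma eqpast:
  assumes r: "r \<in> partc \<alpha>" "r \<in> S"
    and req: "projt X' r = projt Y' r"
    and cmp: "\<forall>t\<in>S. cmpr (projt (X'@[\<alpha>]) t) (projt (Y'@[\<alpha>]) t)"
  shows "\<forall>t\<in>S. projt (cpk S X' (partc \<alpha>) @ [\<alpha>]) t = projt (cpk S Y' (partc \<alpha>) @ [\<alpha>]) t"
proof -
  have 1: "\<forall>t\<in>S. prefix (projt (cpk S X' (partc \<alpha>) @ [\<alpha>]) t) (projt (cpk S Y' (partc \<alpha>) @ [\<alpha>]) t)"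
    by (rule old[OF r req cmp])
  have 2: "\<forall>t\<in>S. prefix (projt (cpk S Y' (partc \<alpha>) @ [\<alpha>]) t) (projt (cpk S X' (partc \<alpha>) @ [\<alpha>]) t)"
  proof (rule old[OF r req[symmetric]], rule ballI)
    fix t assume "t \<in> S" then show "cmpr (projt (Y'@[\<alpha>]) t) (projt (X'@[\<alpha>]) t)" using cmpr_sym[OF bspec[OF cmp]] by blast
  qed
  show ?thesis
  proof
    fix t assume "t \<in> S"
    show "projt (cpk S X' (partc \<alpha>) @ [\<alpha>]) t = projt (cpk S Y' (partc \<alpha>) @ [\<alpha>]) t"
      using prefix_order.antisym[OF 1[rule_format, OF \<open>t \<in> S\<close>] 2[rule_format, OF \<open>t \<in> S\<close>]] .
  qed
qed



definition peq :: "('p,'l) trace \<Rightarrow> ('p,'l) trace \<Rightarrow> bool" where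
  "peq u v \<longleftrightarrow> (\<forall>s. projt u s = projt v s)"

lemma swap_sym: "swap x y \<Longrightarrow> swap y x"
  by (induction rule: swap.induct) (metis inf_commute swap.intros)

lemma swap_projt: "swap x y \<Longrightarrow> projt x s = projt y s"
proof (induction rule: swap.induct)
  case (1 a a' \<sigma> \<sigma>')
  then show ?case by (auto simp: projt_cons)
qed

lemma perm_eq_projt: "perm_eq u v \<Longrightarrow> projt u s = projt v s"
  unfolding perm_eq_def by (induction rule: rtranclp_induct) (auto dest: swap_projt)

lemma perm_eq_refl: "perm_eq u u" by (simp add: perm_eq_def)

lemma perm_eq_trans: "perm_eq u v \<Longrightarrow> perm_eq v w \<Longrightarrow> perm_eq u w"
  by (simp add: perm_eq_def)

lemma perm_eq_sym: "perm_eq u v \<Longrightarrow> perm_eq v u"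
  unfolding perm_eq_def
proof (induction rule: rtranclp_induct)
  case base then show ?case by simp
next
  case (step y z)
  then show ?case by (meson converse_rtranclp_into_rtranclp swap_sym)
qed

lemma swap_app: "swap x y \<Longrightarrow> swap (z @ x @ w) (z @ y @ w)"
proof (induction rule: swap.induct)
  case (1 a a' \<sigma> \<sigma>')
  then show ?case using swap.intros[of a a' "z @ \<sigma>" "\<sigma>' @ w"] by simp
qed

lemma perm_eq_app: "perm_eq x y \<Longrightarrow> perm_eq (z @ x @ w) (z @ y @ w)"
  unfolding perm_eq_def
proof (induction rule: rtranclp_induct)
  case base then show ?case by simp
next
  case (step y u)
  then show ?case by (meson rtranclp.rtrancl_into_rtrancl swap_app)
qed

lemma cls_eqI: "perm_eq u v \<Longrightarrow> cls u = cls v"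
  unfolding cls_def using perm_eq_trans perm_eq_sym by blast

lemma cls_eqD: "cls u = cls v \<Longrightarrow> perm_eq u v"
  unfolding cls_def using perm_eq_refl by blast

lemma move_last: "partt u2 \<inter> partc c = {} \<Longrightarrow> perm_eq (u1 @ c # u2) (u1 @ u2 @ [c])"
proof (induction u2 arbitrary: u1)
  case Nil then show ?case by (simp add: perm_eq_refl)
next
  case (Cons e u2)
  have "swap (u1 @ c # e # u2) (u1 @ e # c # u2)"
    using swap.intros[of c e u1 u2] Cons.prems by auto
  then have 1: "perm_eq (u1 @ c # e # u2) ((u1 @ [e]) @ c # u2)" by (simp add: perm_eq_def)
  have "partt u2 \<inter> partc c = {}" using Cons.prems by auto
  then have "perm_eq ((u1 @ [e]) @ c # u2) ((u1 @ [e]) @ u2 @ [c])" by (rule Cons.IH)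
  with 1 have "perm_eq (u1 @ c # e # u2) ((u1 @ [e]) @ u2 @ [c])" by (rule perm_eq_trans)
  then show ?case by simp
qed

lemma u_nil: "(\<forall>s. projt u s = []) \<Longrightarrow> u = []"
proof (rule ccontr)
  assume h: "\<forall>s. projt u s = []" and "u \<noteq> []"
  then obtain c u' where u: "u = c # u'" by (cases u) auto
  obtain t where t: "t \<in> partc c" using partc_ne[of c] by blast
  have "projt u t = []" using h by simp
  then show False using u t by (simp add: projt_cons)
qed

lemma snoc_last: "xs @ y # zs = ws @ [y'] \<Longrightarrow> zs \<noteq> [] \<Longrightarrow> last zs = y'"
proof -
  assume e: "xs @ y # zs = ws @ [y']" and ne: "zs \<noteq> []"
  have "last (xs @ y # zs) = last zs" using ne by simp
  then show ?thesis using e by simp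
qed

lemma peq_perm: "\<forall>s. projt u s = projt v s \<Longrightarrow> perm_eq u v"
proof (induction v arbitrary: u rule: rev_induct)
  case Nil
  then have "\<forall>s. projt u s = []" by simp
  then have "u = []" by (rule u_nil)
  then show ?case by (simp add: perm_eq_refl)
next
  case (snoc c v0)
  obtain t where t: "t \<in> partc c" using partc_ne[of c] by blast
  have "act c t \<in> set (projt u t)" using snoc.prems t by (simp add: projt_single)
  then have "\<exists>e\<in>set u. t \<in> partc e \<and> act e t = act c t" by (rule act_in_proj)
    then obtain e where "e \<in> set u" "t \<in> partc e" "act e t = act c t" by blast
  then have "c \<in> set u" using act_inj t by metis
  then obtain u1 u2 where u: "u = u1 @ c # u2" "c \<notin> set u2" by (meson split_list_last)
  have disj: "partt u2 \<inter> partc c = {}"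
  proof (rule ccontr)
    assume "partt u2 \<inter> partc c \<noteq> {}"
    then obtain s where s: "s \<in> partt u2" "s \<in> partc c" by blast
    have ne: "projt u2 s \<noteq> []" using s(1) by (simp add: projt_empty_iff)
    have "projt u1 s @ act c s # projt u2 s = projt v0 s @ [act c s]"
      using snoc.prems[rule_format, of s] u s(2) by (simp add: projt_cons)
    then have "last (projt u2 s) = act c s" using snoc_last ne by metis
    then have "act c s \<in> set (projt u2 s)" using ne last_in_set by metis
    then have "\<exists>e\<in>set u2. s \<in> partc e \<and> act e s = act c s" by (rule act_in_proj)
    then obtain e where "e \<in> set u2" "s \<in> partc e" "act e s = act c s" by blast
    then have "e = c" using act_inj s(2) by metis
    then show False using u(2) \<open>e \<in> set u2\<close> by simp
  qed
  have "\<forall>s. projt (u1 @ u2) s = projt v0 s"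
  proof
    fix s
    show "projt (u1 @ u2) s = projt v0 s"
    proof (cases "s \<in> partc c")
      case True
      then have "projt u2 s = []" using disj by (auto simp: projt_empty_iff)
      then show ?thesis using snoc.prems[rule_format, of s] u True by (simp add: projt_cons)
    next
      case False
      then show ?thesis using snoc.prems[rule_format, of s] u by (simp add: projt_cons)
    qed
  qed
  then have "perm_eq (u1 @ u2) v0" using snoc.IH by blast
  then have "perm_eq ([] @ (u1 @ u2) @ [c]) ([] @ v0 @ [c])" by (rule perm_eq_app)
  moreover have "perm_eq u (u1 @ u2 @ [c])" using move_last[OF disj] u by simp
  ultimately show ?case using perm_eq_trans by fastforce
qed

lemma prefix_ext: "\<forall>s. prefix (projt u s) (projt w s) \<Longrightarrow> \<exists>v. \<forall>s. projt w s = projt (u @ v) s"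
proof (induction u rule: rev_induct)
  case Nil then show ?case by (intro exI[of _ w]) simp
next
  case (snoc c u0)
  have "\<forall>s. prefix (projt u0 s) (projt w s)"
  proof
    fix s
    from snoc.prems have "prefix (projt u0 s @ projt [c] s) (projt w s)" by simp
    then show "prefix (projt u0 s) (projt w s)" by (rule append_prefixD)
  qed
  then obtain v0 where v0: "\<forall>s. projt w s = projt (u0 @ v0) s" using snoc.IH by blast
  have pc: "prefix (projt [c] s) (projt v0 s)" for s
  proof -
    have "prefix (projt u0 s @ projt [c] s) (projt w s)" using snoc.prems by simp
    then show ?thesis using v0 by simp
  qed
  obtain t where t: "t \<in> partc c" using partc_ne[of c] by blast
  have "act c t \<in> set (projt v0 t)" using pc[of t] t by (auto simp: projt_single prefix_def)
  then have "\<exists>e\<in>set v0. t \<in> partc e \<and> act e t = act c t" by (rule act_in_proj)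
    then obtain e where "e \<in> set v0" "t \<in> partc e" "act e t = act c t" by blast
  then have "c \<in> set v0" using act_inj t by metis
  then obtain va vb where v: "v0 = va @ c # vb" "c \<notin> set va" by (meson split_list_first)
  have disj: "partt va \<inter> partc c = {}"
  proof (rule ccontr)
    assume "partt va \<inter> partc c \<noteq> {}"
    then obtain s where s: "s \<in> partt va" "s \<in> partc c" by blast
    have ne: "projt va s \<noteq> []" using s(1) by (simp add: projt_empty_iff)
    have "prefix [act c s] (projt va s @ projt (c # vb) s)" using pc[of s] v s(2) by (simp add: projt_single)
    then have "hd (projt va s) = act c s" using ne by (cases "projt va s") auto
    then have "act c s \<in> set (projt va s)" using ne hd_in_set by metis
    then have "\<exists>e\<in>set va. s \<in> partc e \<and> act e s = act c s" by (rule act_in_proj)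
    then obtain e where "e \<in> set va" "s \<in> partc e" "act e s = act c s" by blast
    then have "e = c" using act_inj s(2) by metis
    then show False using v(2) \<open>e \<in> set va\<close> by simp
  qed
  show ?case
  proof (intro exI allI)
    fix s
    show "projt w s = projt ((u0 @ [c]) @ va @ vb) s"
    proof (cases "s \<in> partc c")
      case True
      then have "projt va s = []" using disj by (auto simp: projt_empty_iff)
      then show ?thesis using v0 v True by (simp add: projt_cons)
    next
      case False
      then show ?thesis using v0 v by (simp add: projt_cons)
    qed
  qed
qed

fun mx :: "('p,'l) trace \<Rightarrow> ('p,'l) comm set" where
  "mx [] = {}"
| "mx (a # w) = (if partc a \<inter> partt w = {} then {a} else {}) \<union> mx w"

lemma mx_app: "mx Z1 = mx Z2 \<Longrightarrow> partt Z1 = partt Z2 \<Longrightarrow> mx (\<sigma> @ Z1) = mx (\<sigma> @ Z2)"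
  by (induction \<sigma>) auto

lemma swap_mx: "swap x y \<Longrightarrow> mx x = mx y"
proof (induction rule: swap.induct)
  case (1 a a' \<sigma> \<sigma>')
  have "mx (a # a' # \<sigma>') = mx (a' # a # \<sigma>')" using 1 by auto
  moreover have "partt (a # a' # \<sigma>') = partt (a' # a # \<sigma>')" by auto
  ultimately show ?case by (rule mx_app)
qed

lemma perm_mx: "perm_eq u v \<Longrightarrow> mx u = mx v"
  unfolding perm_eq_def by (induction rule: rtranclp_induct) (auto dest: swap_mx)

lemma cpre_mx: "mx (cpre xs \<tau>) = mx \<tau>"
  by (induction xs) (auto simp: Let_def)

lemma mx_last: "w \<noteq> [] \<Longrightarrow> last w \<in> mx w"
  by (induction w) auto

lemma pointed_single: "pointed [c]"
  by (simp add: pointed_def)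

lemma pointed_cons: "pointed Y \<Longrightarrow> partc a \<inter> partt Y \<noteq> {} \<Longrightarrow> pointed (a # Y)"
  unfolding pointed_def
proof (intro conjI allI impI)
  fix i assume pY: "Y \<noteq> [] \<and> (\<forall>i. Suc i < length Y \<longrightarrow> (\<exists>j>i. j < length Y \<and> partc (Y ! i) \<inter> partc (Y ! j) \<noteq> {}))"
    and ov: "partc a \<inter> partt Y \<noteq> {}" and i: "Suc i < length (a # Y)"
  show "\<exists>j>i. j < length (a # Y) \<and> partc ((a # Y) ! i) \<inter> partc ((a # Y) ! j) \<noteq> {}"
  proof (cases i)
    case 0
    from ov obtain e where "e \<in> set Y" "partc a \<inter> partc e \<noteq> {}" by (auto simp: partt_def)
    then obtain k where "k < length Y" "Y ! k = e" by (meson in_set_conv_nth)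
    then show ?thesis using 0 \<open>partc a \<inter> partc e \<noteq> {}\<close> by (intro exI[of _ "Suc k"]) auto
  next
    case (Suc i')
    then have "Suc i' < length Y" using i by simp
    then obtain j where "j > i'" "j < length Y" "partc (Y ! i') \<inter> partc (Y ! j) \<noteq> {}" using pY by blast
    then show ?thesis using Suc by (intro exI[of _ "Suc j"]) auto
  qed
qed simp

lemma pointed_cpre: "pointed \<tau> \<Longrightarrow> pointed (cpre xs \<tau>)"
  by (induction xs) (auto simp: Let_def intro: pointed_cons)

lemma cpre_append: "cpre (xs @ ys) \<tau> = cpre xs (cpre ys \<tau>)"
  by (induction xs) (auto simp: Let_def)

lemma cpre_keep: "s \<in> partt \<tau> \<Longrightarrow> projt (cpre xs \<tau>) s = projt xs s @ projt \<tau> s"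
  by (simp add: cpre_cpk cpk_keep)

lemma cpre_snoc: "\<exists>A. cpre xs \<tau> = A @ \<tau>"
  by (simp add: cpre_cpk)

lemma partt_cpre_mono: "partt (cpre xs \<tau>) \<subseteq> partt (cpre xs (\<tau> @ \<tau>'))"
  by (induction xs) (auto simp: Let_def)

lemma cpre_mono: "prefix (projt (cpre xs \<tau>) s) (projt (cpre xs (\<tau> @ \<tau>')) s)"
proof (induction xs)
  case Nil then show ?case by simp
next
  case (Cons a xs)
  let ?Y = "cpre xs \<tau>" and ?Y' = "cpre xs (\<tau> @ \<tau>')"
  have sub: "partt ?Y \<subseteq> partt ?Y'" by (rule partt_cpre_mono)
  show ?case
  proof (cases "partc a \<inter> partt ?Y \<noteq> {}")
    case True
    then have "partc a \<inter> partt ?Y' \<noteq> {}" using sub by blast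
    then show ?thesis using True Cons by (auto simp: Let_def projt_cons)
  next
    case False
    show ?thesis
    proof (cases "partc a \<inter> partt ?Y' \<noteq> {}")
      case False2: False
      then show ?thesis using False Cons by (simp add: Let_def)
    next
      case True
      show ?thesis
      proof (cases "s \<in> partc a")
        case True2: True
        then have "s \<notin> partt ?Y" using False by blast
        then have "projt ?Y s = []" by (simp add: projt_empty_iff)
        then show ?thesis using False by (simp add: Let_def)
      next
        case False3: False
        then show ?thesis using False True Cons by (simp add: Let_def projt_cons)
      qed
    qed
  qed
qed



inductive reach :: "('p,'l) gty \<Rightarrow> ('p,'l) trace \<Rightarrow> ('p,'l) gty \<Rightarrow> bool" where
  reach_nil: "reach G [] G"
| reach_cons: "(l, G') \<in> set bs \<Longrightarrow> reach G' w H \<Longrightarrow> reach (Com p q bs) ((p,q,l) # w) H"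

lemma reach_Cons_inv: "reach G (c # w) H \<Longrightarrow>
   \<exists>p q l bs G'. G = Com p q bs \<and> c = (p,q,l) \<and> (l, G') \<in> set bs \<and> reach G' w H"
  by (cases rule: reach.cases) auto

lemma reach_Nil_inv: "reach G [] H \<Longrightarrow> H = G"
  by (cases rule: reach.cases) auto

lemma is_trace_reach: "is_trace G w \<longleftrightarrow> w \<noteq> [] \<and> (\<exists>H. reach G w H)"
proof
  assume "is_trace G w"
  then show "w \<noteq> [] \<and> (\<exists>H. reach G w H)"
    by (induction rule: is_trace.induct) (auto intro: reach.intros)
next
  assume "w \<noteq> [] \<and> (\<exists>H. reach G w H)"
  then obtain H where "w \<noteq> []" "reach G w H" by blast
  then show "is_trace G w"
  proof (induction w arbitrary: G)
    case Nil then show ?case by simp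
  next
    case (Cons c w)
    from reach_Cons_inv[OF Cons.prems(2)] obtain p q l bs G' where
      g: "G = Com p q bs" "c = (p,q,l)" "(l, G') \<in> set bs" "reach G' w H" by blast
    show ?case
    proof (cases "w = []")
      case True then show ?thesis using g is_trace.intros(1) by fastforce
    next
      case False then show ?thesis using g Cons.IH is_trace.intros(2) by fastforce
    qed
  qed
qed

lemma reach_append: "reach G (w1 @ w2) H \<longleftrightarrow> (\<exists>M. reach G w1 M \<and> reach M w2 H)"
proof (induction w1 arbitrary: G)
  case Nil then show ?case by (auto intro: reach.intros dest: reach_Nil_inv)
next
  case (Cons c w1)
  show ?case
  proof
    assume "reach G ((c # w1) @ w2) H"
    then obtain p q l bs G' where g: "G = Com p q bs" "c = (p,q,l)" "(l, G') \<in> set bs" "reach G' (w1 @ w2) H"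
      using reach_Cons_inv[of G c "w1 @ w2" H] by auto
    then obtain M where "reach G' w1 M" "reach M w2 H" using Cons.IH by blast
    then show "\<exists>M. reach G (c # w1) M \<and> reach M w2 H" using g by (auto intro: reach.intros)
  next
    assume "\<exists>M. reach G (c # w1) M \<and> reach M w2 H"
    then obtain M where m: "reach G (c # w1) M" "reach M w2 H" by blast
    then obtain p q l bs G' where g: "G = Com p q bs" "c = (p,q,l)" "(l, G') \<in> set bs" "reach G' w1 M"
      using reach_Cons_inv[of G c w1 M] by auto
    then have "reach G' (w1 @ w2) H" using Cons.IH m(2) by blast
    then show "reach G ((c # w1) @ w2) H" using g by (auto intro: reach.intros)
  qed
qed

lemma reach_snoc: "reach G (w @ [c]) H \<Longrightarrow>
   \<exists>p q l bs. c = (p,q,l) \<and> reach G w (Com p q bs) \<and> (l, H) \<in> set bs"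
proof -
  assume "reach G (w @ [c]) H"
  then obtain M where m: "reach G w M" "reach M [c] H" unfolding reach_append by blast
  from reach_Cons_inv[OF m(2)] obtain p q l bs G' where
    "M = Com p q bs" "c = (p,q,l)" "(l, G') \<in> set bs" "reach G' [] H" by blast
  then show ?thesis using m(1) reach_Nil_inv by fastforce
qed

lemma reach_snocI: "reach G w (Com p q bs) \<Longrightarrow> (l, H) \<in> set bs \<Longrightarrow> reach G (w @ [(p,q,l)]) H"
  using reach_append reach.intros by fastforce

lemma Tr_End: "\<not> is_trace End w"
  by (auto elim: is_trace.cases)

lemma partg_End: "partg End = {}"
  by (auto simp: partg_def Tr_def Tr_End)

lemma partg_Com: "bs \<noteq> [] \<Longrightarrow> {p, q} \<subseteq> partg (Com p q bs)"
proof -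
  assume "bs \<noteq> []"
  then obtain l G' where "(l, G') \<in> set bs" by (cases bs) auto
  then have "is_trace (Com p q bs) [(p,q,l)]" by (rule is_trace.intros)
  then show ?thesis by (force simp: partg_def Tr_def partt_def)
qed

lemma partg_branch: "(l, G') \<in> set bs \<Longrightarrow> partg G' \<subseteq> partg (Com p q bs)"
proof
  fix x assume b: "(l, G') \<in> set bs" and "x \<in> partg G'"
  then obtain \<sigma> where "is_trace G' \<sigma>" "x \<in> partt \<sigma>" by (auto simp: partg_def Tr_def)
  then have "is_trace (Com p q bs) ((p,q,l) # \<sigma>)" "x \<in> partt ((p,q,l) # \<sigma>)"
    using b by (auto intro: is_trace.intros)
  then show "x \<in> partg (Com p q bs)" by (auto simp: partg_def Tr_def)
qed

lemma wf_Com: "wf_gty (Com p q bs) \<Longrightarrow> bs \<noteq> [] \<and> distinct (map fst bs) \<and> p \<noteq> q \<and> (\<forall>b\<in>set bs. wf_gty (snd b))"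
  by (cases rule: wf_gty.cases) auto

lemma wf_reach: "reach G w H \<Longrightarrow> wf_gty G \<Longrightarrow> wf_gty H"
proof (induction rule: reach.induct)
  case (reach_cons l G' bs w H p q)
  then have "wf_gty (snd (l, G'))" using wf_Com[OF reach_cons.prems] by blast
  then show ?case using reach_cons by simp
qed simp

lemma proj_notpart: assumes "proj H t P" "t \<notin> partg H" shows "P = Nil"
  using assms(1)
proof (cases rule: proj.cases)
  case (proj_skip p q bs)
  note assms(2)
  moreover have "hd bs \<in> set bs" using proj_skip by simp
  then have "partg (snd (hd bs)) \<subseteq> partg H" using partg_branch[of "fst (hd bs)" "snd (hd bs)" bs p q] proj_skip by simp
  ultimately show ?thesis using proj_skip by blast
qed (use assms in auto)

lemma proj_sender: "wf_gty (Com p q bs) \<Longrightarrow> proj (Com p q bs) p P \<Longrightarrow>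
   \<exists>cs. P = Send q cs \<and> list_all2 (\<lambda>b c. fst b = fst c \<and> proj (snd b) p (snd c)) bs cs"
proof -
  assume w: "wf_gty (Com p q bs)" and pr: "proj (Com p q bs) p P"
  have "p \<in> partg (Com p q bs)" "p \<noteq> q" using wf_Com[OF w] partg_Com[of bs p q] by auto
  with pr show ?thesis by (cases rule: proj.cases) auto
qed

lemma proj_receiver: "wf_gty (Com p q bs) \<Longrightarrow> proj (Com p q bs) q P \<Longrightarrow>
   \<exists>cs. P = Recv p cs \<and> list_all2 (\<lambda>b c. fst b = fst c \<and> proj (snd b) q (snd c)) bs cs"
proof -
  assume w: "wf_gty (Com p q bs)" and pr: "proj (Com p q bs) q P"
  have "q \<in> partg (Com p q bs)" "p \<noteq> q" using wf_Com[OF w] partg_Com[of bs p q] by auto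
  with pr show ?thesis by (cases rule: proj.cases) auto
qed

lemma proj_other: "proj (Com p q bs) t P \<Longrightarrow> t \<notin> {p, q} \<Longrightarrow> (l, G') \<in> set bs \<Longrightarrow> proj G' t P"
proof -
  assume pr: "proj (Com p q bs) t P" and t: "t \<notin> {p,q}" and b: "(l, G') \<in> set bs"
  from pr show ?thesis
  proof (cases rule: proj.cases)
    case proj_out
    then have "t \<notin> partg G'" using partg_branch[OF b] by blast
    then show ?thesis using proj_out by (auto intro: proj.intros)
  next
    case proj_skip
    then show ?thesis using b by fastforce
  qed (use t in auto)
qed

fun pstep :: "('p,'l) proc \<Rightarrow> ('p,'l) act \<Rightarrow> ('p,'l) proc option" where
  "pstep (Send q cs) (Out q' l) = (if q = q' then map_of cs l else None)"
| "pstep (Recv p cs) (In p' l) = (if p = p' then map_of cs l else None)"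
| "pstep _ _ = None"

fun resid :: "('p,'l) proc \<Rightarrow> ('p,'l) act list \<Rightarrow> ('p,'l) proc option" where
  "resid P [] = Some P"
| "resid P (a # h) = (case pstep P a of None \<Rightarrow> None | Some P' \<Rightarrow> resid P' h)"

lemma resid_append: "resid P (h1 @ h2) = (case resid P h1 of None \<Rightarrow> None | Some P' \<Rightarrow> resid P' h2)"
  by (induction h1 arbitrary: P) (auto split: option.splits)

lemma la2_map_of:
  "list_all2 (\<lambda>b c. fst b = fst c \<and> R (snd b) (snd c)) bs cs \<Longrightarrow> distinct (map fst bs) \<Longrightarrow>
   (l, G') \<in> set bs \<Longrightarrow> \<exists>P'. map_of cs l = Some P' \<and> R G' P'"
proof (induction rule: list_all2_induct)
  case Nil then show ?case by simp
next
  case (Cons b bs c cs)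
  show ?case
  proof (cases "b = (l, G')")
    case True then show ?thesis using Cons by (cases c) auto
  next
    case False
    then have "(l, G') \<in> set bs" using Cons.prems by simp
    moreover have "fst b \<noteq> l" using Cons.prems \<open>(l, G') \<in> set bs\<close> by (auto simp: image_iff)
    ultimately show ?thesis using Cons by (cases c) auto
  qed
qed

lemma la2_fst: "list_all2 (\<lambda>b c. fst b = fst c \<and> R (snd b) (snd c)) bs cs \<Longrightarrow> map fst bs = map fst cs"
  by (induction rule: list_all2_induct) auto

lemma proj_step: "wf_gty (Com p q bs) \<Longrightarrow> proj (Com p q bs) t P \<Longrightarrow> (l, G') \<in> set bs \<Longrightarrow>
  \<exists>P'. resid P (projt [(p,q,l)] t) = Some P' \<and> proj G' t P'"
proof -
  assume w: "wf_gty (Com p q bs)" and pr: "proj (Com p q bs) t P" and b: "(l, G') \<in> set bs"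
  have wf: "bs \<noteq> []" "distinct (map fst bs)" "p \<noteq> q" using wf_Com[OF w] by auto
  show ?thesis
  proof (cases "t = p")
    case True
    obtain cs where cs: "P = Send q cs" "list_all2 (\<lambda>b c. fst b = fst c \<and> proj (snd b) p (snd c)) bs cs"
      using proj_sender[OF w] pr True by blast
    obtain P' where "map_of cs l = Some P'" "proj G' p P'" using la2_map_of[OF cs(2) wf(2) b] by blast
    then show ?thesis using cs True by auto
  next
    case False
    show ?thesis
    proof (cases "t = q")
      case True
      obtain cs where cs: "P = Recv p cs" "list_all2 (\<lambda>b c. fst b = fst c \<and> proj (snd b) q (snd c)) bs cs"
        using proj_receiver[OF w] pr True by blast
      obtain P' where "map_of cs l = Some P'" "proj G' q P'" using la2_map_of[OF cs(2) wf(2) b] by blast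
      then show ?thesis using cs True wf(3) by auto
    next
      case False2: False
      then have "proj G' t P" using proj_other[OF pr _ b] False by blast
      then show ?thesis using False False2 by auto
    qed
  qed
qed

lemma proj_reach: "reach G w H \<Longrightarrow> wf_gty G \<Longrightarrow> proj G t P \<Longrightarrow>
   \<exists>P'. resid P (projt w t) = Some P' \<and> proj H t P'"
proof (induction arbitrary: P rule: reach.induct)
  case (reach_nil G) then show ?case by simp
next
  case (reach_cons l G' bs w H p q)
  obtain P1 where p1: "resid P (projt [(p,q,l)] t) = Some P1" "proj G' t P1"
    using proj_step[OF reach_cons.prems(1,2) reach_cons.hyps(1)] by blast
  have "wf_gty G'" using wf_Com[OF reach_cons.prems(1)] reach_cons.hyps(1) by fastforce
  then obtain P' where "resid P1 (projt w t) = Some P'" "proj H t P'" using reach_cons.IH p1(2) by blast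
  then show ?case using p1(1) resid_append[of P "projt [(p,q,l)] t" "projt w t"]
    by (auto simp: projt_Cons2[of "(p,q,l)" w])
qed

definition RD :: "'p \<Rightarrow> ('p,'l) gty \<Rightarrow> nat \<Rightarrow> bool" where
  "RD r H n \<longleftrightarrow> (\<exists>w u v bs. length w = n \<and> reach H w (Com u v bs) \<and> r \<in> {u, v})"

definition rd :: "'p \<Rightarrow> ('p,'l) gty \<Rightarrow> nat" where
  "rd r H = (LEAST n. RD r H n)"

lemma RD_ex: "r \<in> partg H \<Longrightarrow> \<exists>n. RD r H n"
proof -
  assume "r \<in> partg H"
  then obtain \<sigma> where s: "is_trace H \<sigma>" "r \<in> partt \<sigma>" by (auto simp: partg_def Tr_def)
  then obtain c where c: "c \<in> set \<sigma>" "r \<in> partc c" by (auto simp: partt_def)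
  then obtain w rest where "\<sigma> = w @ c # rest" by (meson split_list)
  then have "is_trace H ((w @ [c]) @ rest)" using s(1) by simp
  then obtain H' where "reach H ((w @ [c]) @ rest) H'" unfolding is_trace_reach by blast
  then obtain M where "reach H (w @ [c]) M" unfolding reach_append by blast
  then obtain p q l bs where "c = (p,q,l)" "reach H w (Com p q bs)" using reach_snoc by blast
  then show ?thesis using c(2) unfolding RD_def by auto
qed

lemma rd_step: "r \<in> partg H \<Longrightarrow> H = Com u v bs \<Longrightarrow> r \<notin> {u, v} \<Longrightarrow>
   \<exists>l B. (l, B) \<in> set bs \<and> rd r B < rd r H"
proof -
  assume rp: "r \<in> partg H" and H: "H = Com u v bs" and ru: "r \<notin> {u, v}"
  obtain n where "RD r H n" using RD_ex[OF rp] by blast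
  then have ex: "RD r H (rd r H)" unfolding rd_def by (rule LeastI)
  then obtain w u' v' bs' where w: "length w = rd r H" "reach H w (Com u' v' bs')" "r \<in> {u', v'}"
    unfolding RD_def by blast
  show ?thesis
  proof (cases w)
    case Nil
    then have "Com u' v' bs' = H" using w(2) reach_Nil_inv by blast
    then show ?thesis using H ru w(3) by auto
  next
    case (Cons c w')
    from reach_Cons_inv[of H c w'] w(2) Cons obtain p q l bs0 G' where
      g: "H = Com p q bs0" "c = (p,q,l)" "(l, G') \<in> set bs0" "reach G' w' (Com u' v' bs')" by blast
    have "RD r G' (length w')" unfolding RD_def using g(4) w(3) by blast
    then have "rd r G' \<le> length w'" unfolding rd_def by (rule Least_le)
    then have "rd r G' < rd r H" using w(1) Cons by simp
    then show ?thesis using g H by auto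
  qed
qed



lemma act_self_Out: "act (u,v,l) u = Out v l" by (simp add: act_def)
lemma act_self_In: "u \<noteq> v \<Longrightarrow> act (u,v,l) v = In u l" by (simp add: act_def)

lemma label_agree:
  assumes uv: "u \<noteq> v"
    and hu: "projt w u = projt z u @ Out v l # R1"
    and hv: "projt w v = projt z v @ In u l' # R2"
  shows "l = l'"
proof -
  define F where "F = filter (\<lambda>c. partc c = {u,v}) w"
  define k where "k = length (filter (\<lambda>c. partc c = {u,v}) z)"
  have vu: "{v,u} = {u,v}" by blast
  have k1: "length (filter (\<lambda>x. partner x = v) (projt z u)) = k"
    unfolding k_def by (rule cnt_partner[OF uv])
  have k2: "length (filter (\<lambda>x. partner x = u) (projt z v)) = k"
    unfolding k_def using cnt_partner[of v u z] uv unfolding vu by simp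
  have g1: "filter (\<lambda>x. partner x = v) (projt w u) = map (\<lambda>c. act c u) F"
    unfolding F_def by (rule filter_partner[OF uv])
  have f1: "map (\<lambda>c. act c u) F = filter (\<lambda>x. partner x = v) (projt z u) @ Out v l # filter (\<lambda>x. partner x = v) R1"
    using g1[unfolded hu] by simp
  have g2: "filter (\<lambda>x. partner x = u) (projt w v) = map (\<lambda>c. act c v) F"
    unfolding F_def using filter_partner[of v u w] uv unfolding vu by simp
  have f2: "map (\<lambda>c. act c v) F = filter (\<lambda>x. partner x = u) (projt z v) @ In u l' # filter (\<lambda>x. partner x = u) R2"
    using g2[unfolded hv] by simp
  have "length (map (\<lambda>c. act c u) F) = k + Suc (length (filter (\<lambda>x. partner x = v) R1))"
    unfolding f1 using k1 by simp
  then have kl: "k < length F" by simp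
  have "(map (\<lambda>c. act c u) F) ! k = Out v l" unfolding f1 using k1 by (simp add: nth_append)
  then have e1: "act (F ! k) u = Out v l" using kl by simp
  have "(map (\<lambda>c. act c v) F) ! k = In u l'" unfolding f2 using k2 by (simp add: nth_append)
  then have e2: "act (F ! k) v = In u l'" using kl by simp
  have "F ! k \<in> set F" using kl by simp
  then have "partc (F ! k) = {u,v}" unfolding F_def by simp
  then have "u \<in> partc (F ! k)" by simp
  then have "F ! k = (u,v,l)" using e1 by (rule act_Out)
  then have "act (F ! k) v = In u l" using act_self_In uv by simp
  then show ?thesis using e2 by simp
qed

lemma map_of_ne: "map_of cs l \<noteq> None \<Longrightarrow> l \<in> fst ` set cs"
  using map_of_eq_None_iff by metis

lemma pstep_Send: "pstep (Send v cs) x \<noteq> None \<Longrightarrow> \<exists>l. x = Out v l \<and> l \<in> fst ` set cs"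
  by (cases x) (auto split: if_splits intro: map_of_ne)

lemma pstep_Recv: "pstep (Recv u cs) x \<noteq> None \<Longrightarrow> \<exists>l. x = In u l \<and> l \<in> fst ` set cs"
  by (cases x) (auto split: if_splits intro: map_of_ne)

lemma strict_prefix_ex: "strict_prefix xs ys \<Longrightarrow> \<exists>x R. ys = xs @ x # R"
proof -
  assume "strict_prefix xs ys"
  then obtain zs where "ys = xs @ zs" "zs \<noteq> []" unfolding strict_prefix_def prefix_def by auto
  then show ?thesis by (cases zs) auto
qed

lemma cons_construct:
  fixes \<rho>' :: "('p,'l) trace"
  assumes wf2: "wf_gty G2"
    and Pt: "\<forall>t\<in>N. proj G2 t (Pt t)"
    and acc: "\<forall>t\<in>N. resid (Pt t) (projt \<rho>' t) \<noteq> None"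
    and rN: "r \<in> N" and ra: "r \<in> partc \<alpha>" and ne: "\<rho>' \<noteq> []" and la: "last \<rho>' = \<alpha>"
  shows "\<exists>\<rho>''. is_trace G2 \<rho>'' \<and> last \<rho>'' = \<alpha> \<and> projt \<rho>'' r = projt \<rho>' r \<and>
           (\<forall>t\<in>N. cmpr (projt \<rho>'' t) (projt \<rho>' t))"
proof -
  define unex where "unex = (\<lambda>(\<zeta>::('p,'l) trace) t. t \<in> N \<and> strict_prefix (projt \<zeta> t) (projt \<rho>' t))"
  define Cmp where "Cmp = (\<lambda>\<zeta>::('p,'l) trace. \<forall>t\<in>N. cmpr (projt \<zeta> t) (projt \<rho>' t))"
  define \<mu> where "\<mu> = (\<lambda>\<zeta>::('p,'l) trace. \<Sum>t \<in> partt \<rho>' \<inter> N. length (projt \<rho>' t) - length (projt \<zeta> t))"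
  have finP: "finite (partt \<rho>' \<inter> N)" using finite_partt by blast
  have notunex: "prefix (projt \<rho>' t) (projt \<zeta> t)" if "Cmp \<zeta>" "t \<in> N" "\<not> unex \<zeta> t" for \<zeta> t
    using that unfolding Cmp_def unex_def cmpr_def strict_prefix_def by auto
  have nxt: "\<exists>x R Q. projt \<rho>' t = projt \<zeta> t @ x # R \<and> proj H t Q \<and> pstep Q x \<noteq> None"
    if un: "unex \<zeta> t" and rz0: "reach G2 \<zeta> H" for \<zeta> t H
  proof -
    have tN: "t \<in> N" using un unfolding unex_def by simp
    have "strict_prefix (projt \<zeta> t) (projt \<rho>' t)" using un unfolding unex_def by simp
    then obtain x R where xr: "projt \<rho>' t = projt \<zeta> t @ x # R"
      using strict_prefix_ex by blast
    obtain Q where q: "resid (Pt t) (projt \<zeta> t) = Some Q" "proj H t Q"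
      using proj_reach[OF rz0 wf2] Pt tN by blast
    have "resid (Pt t) (projt \<rho>' t) \<noteq> None" using acc tN by blast
    then have "resid Q (x # R) \<noteq> None" using xr q(1) resid_append[of "Pt t" "projt \<zeta> t" "x # R"] by simp
    then have "pstep Q x \<noteq> None" by (auto split: option.splits)
    then show ?thesis using xr q(2) by blast
  qed
  have mu_le: "\<mu> (\<zeta> @ [c]) \<le> \<mu> \<zeta>" for \<zeta> c
    unfolding \<mu>_def by (rule sum_mono) simp
  have mu_lt: "\<mu> (\<zeta> @ [c]) < \<mu> \<zeta>" if "unex \<zeta> t" "t \<in> partc c" for \<zeta> c t
  proof -
    have tN: "t \<in> N" and sp: "strict_prefix (projt \<zeta> t) (projt \<rho>' t)" using that(1) unfolding unex_def by auto
    have "projt \<rho>' t \<noteq> []" using sp by auto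
    then have tP: "t \<in> partt \<rho>' \<inter> N" using tN by (simp add: projt_empty_iff)
    have l: "length (projt \<zeta> t) < length (projt \<rho>' t)" using sp prefix_length_less by blast
    show ?thesis unfolding \<mu>_def
    proof (rule sum_strict_mono_ex1[OF finP])
      show "\<forall>x\<in>partt \<rho>' \<inter> N. length (projt \<rho>' x) - length (projt (\<zeta> @ [c]) x) \<le> length (projt \<rho>' x) - length (projt \<zeta> x)"
        by (intro ballI diff_le_mono2) simp
      show "\<exists>a\<in>partt \<rho>' \<inter> N. length (projt \<rho>' a) - length (projt (\<zeta> @ [c]) a) < length (projt \<rho>' a) - length (projt \<zeta> a)"
        using tP l that(2) by (intro bexI[of _ t]) (auto simp: projt_single)
    qed
  qed
  have step: "\<exists>c B. reach G2 (\<zeta> @ [c]) B \<and> Cmp (\<zeta> @ [c]) \<and> prefix (projt (\<zeta> @ [c]) r) (projt \<rho>' r) \<and>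
               (\<mu> (\<zeta> @ [c]) < \<mu> \<zeta> \<or> (\<mu> (\<zeta> @ [c]) = \<mu> \<zeta> \<and> rd r B < rd r H))"
    if rz: "reach G2 \<zeta> H" and cz: "Cmp \<zeta>" and sr: "strict_prefix (projt \<zeta> r) (projt \<rho>' r)" for \<zeta> H
  proof -
    have wfH: "wf_gty H" using wf_reach[OF rz wf2] .
    have ur: "unex \<zeta> r" using sr rN unfolding unex_def by simp
    obtain x R Q where xr: "projt \<rho>' r = projt \<zeta> r @ x # R" "proj H r Q" "pstep Q x \<noteq> None"
      using nxt[OF ur rz] by blast
    have qn: "Q \<noteq> Nil" using xr(3) by auto
    have rH: "r \<in> partg H"
    proof (rule ccontr)
      assume "r \<notin> partg H"
      then have "Q = Nil" by (rule proj_notpart[OF xr(2)])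
      with qn show False by simp
    qed
    then have "H \<noteq> End" using partg_End by force
    then obtain u v bs where H: "H = Com u v bs" by (cases H) auto
    have wfc: "bs \<noteq> []" "distinct (map fst bs)" "u \<noteq> v" using wf_Com[OF wfH[unfolded H]] by auto
    have pu: "projt (\<zeta> @ [(u,v,l)]) u = projt \<zeta> u @ [Out v l]" for l
      by (simp add: projt_single act_self_Out)
    have pv: "projt (\<zeta> @ [(u,v,l)]) v = projt \<zeta> v @ [In u l]" for l
      using wfc(3) by (simp add: projt_single act_self_In)
    have po: "projt (\<zeta> @ [(u,v,l)]) t = projt \<zeta> t" if "t \<notin> {u,v}" for l t
      using that by (simp add: projt_single)
    have ext: "cmpr (projt (\<zeta> @ [c]) t) (projt \<rho>' t)" if "t \<in> N" "\<not> unex \<zeta> t" for t c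
    proof -
      have "prefix (projt \<rho>' t) (projt \<zeta> t)" using notunex[OF cz that] .
      then have "prefix (projt \<rho>' t) (projt (\<zeta> @ [c]) t)" by (auto simp: prefix_def)
      then show ?thesis by (simp add: cmpr_def)
    qed
    have oth: "cmpr (projt (\<zeta> @ [(u,v,l)]) t) (projt \<rho>' t)" if "t \<in> N" "t \<notin> {u,v}" for t l
      using cz that po[OF that(2)] unfolding Cmp_def by simp
    have sendlab: "\<exists>l. projt \<rho>' u = projt \<zeta> u @ Out v l # R' \<and> l \<in> fst ` set bs" if hh: "unex \<zeta> u"
      "projt \<rho>' u = projt \<zeta> u @ x' # R'" "proj H u Q'" "pstep Q' x' \<noteq> None" for x' R' Q'
    proof -
      have "proj (Com u v bs) u Q'" using hh(3) H by simp
      from proj_sender[OF wfH[unfolded H] this]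
      obtain cs where cs: "Q' = Send v cs" "list_all2 (\<lambda>b c. fst b = fst c \<and> proj (snd b) u (snd c)) bs cs"
        by blast
      have "pstep (Send v cs) x' \<noteq> None" using hh(4) cs(1) by simp
      from pstep_Send[OF this] obtain l where "x' = Out v l" "l \<in> fst ` set cs" by blast
      moreover have "fst ` set cs = fst ` set bs" using la2_fst[OF cs(2)] by (metis set_map)
      ultimately show ?thesis using hh(2) by auto
    qed
    have recvlab: "\<exists>l. projt \<rho>' v = projt \<zeta> v @ In u l # R' \<and> l \<in> fst ` set bs" if hh: "unex \<zeta> v"
      "projt \<rho>' v = projt \<zeta> v @ x' # R'" "proj H v Q'" "pstep Q' x' \<noteq> None" for x' R' Q'
    proof -
      have "proj (Com u v bs) v Q'" using hh(3) H by simp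
      from proj_receiver[OF wfH[unfolded H] this]
      obtain cs where cs: "Q' = Recv u cs" "list_all2 (\<lambda>b c. fst b = fst c \<and> proj (snd b) v (snd c)) bs cs"
        by blast
      have "pstep (Recv u cs) x' \<noteq> None" using hh(4) cs(1) by simp
      from pstep_Recv[OF this] obtain l where "x' = In u l" "l \<in> fst ` set cs" by blast
      moreover have "fst ` set cs = fst ` set bs" using la2_fst[OF cs(2)] by (metis set_map)
      ultimately show ?thesis using hh(2) by auto
    qed
    have rpre: "prefix (projt (\<zeta> @ [c]) r) (projt \<rho>' r)" if "Cmp (\<zeta> @ [c])"
      "r \<in> partc c \<Longrightarrow> projt (\<zeta> @ [c]) r = projt \<zeta> r @ [x]" for c
    proof (cases "r \<in> partc c")
      case True then show ?thesis using that(2) xr(1) by (auto simp: prefix_def)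
    next
      case False then show ?thesis using sr by (simp add: projt_single strict_prefix_def)
    qed
    show ?thesis
    proof (cases "unex \<zeta> u")
      case True
      obtain x' R' Q' where a: "projt \<rho>' u = projt \<zeta> u @ x' # R'" "proj H u Q'" "pstep Q' x' \<noteq> None"
        using nxt[OF True rz] by blast
      obtain l where l: "projt \<rho>' u = projt \<zeta> u @ Out v l # R'" "l \<in> fst ` set bs"
        using sendlab[OF True a] by blast
      obtain B where B: "(l, B) \<in> set bs" using l(2) by auto
      have reachB: "reach G2 (\<zeta> @ [(u,v,l)]) B" using reach_snocI[OF rz[unfolded H] B] .
      have vcase: "cmpr (projt (\<zeta> @ [(u,v,l)]) v) (projt \<rho>' v) \<and> (unex \<zeta> v \<longrightarrow> prefix (projt (\<zeta> @ [(u,v,l)]) v) (projt \<rho>' v))"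
        if "v \<in> N"
      proof (cases "unex \<zeta> v")
        case True
        obtain y R2 Q2 where b: "projt \<rho>' v = projt \<zeta> v @ y # R2" "proj H v Q2" "pstep Q2 y \<noteq> None"
          using nxt[OF True rz] by blast
        obtain l' where l': "projt \<rho>' v = projt \<zeta> v @ In u l' # R2"
          using recvlab[OF True b] by blast
        have "l = l'" using label_agree[OF wfc(3) l(1) l'] .
        then have "prefix (projt (\<zeta> @ [(u,v,l)]) v) (projt \<rho>' v)" using l' pv by (auto simp: prefix_def)
        then show ?thesis by (simp add: cmpr_def)
      next
        case False then show ?thesis using ext[OF that False, of "(u,v,l)"] by simp
      qed
      have pre_u: "prefix (projt (\<zeta> @ [(u,v,l)]) u) (projt \<rho>' u)" using l(1) pu by (auto simp: prefix_def)
      have cmp': "Cmp (\<zeta> @ [(u,v,l)])"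
        unfolding Cmp_def
      proof
        fix t assume tN: "t \<in> N"
        show "cmpr (projt (\<zeta> @ [(u,v,l)]) t) (projt \<rho>' t)"
        proof (cases "t = u")
          case True then show ?thesis using pre_u by (simp add: cmpr_def)
        next
          case False
          show ?thesis
          proof (cases "t = v")
            case True then show ?thesis using vcase tN by simp
          next
            case False2: False then show ?thesis using oth tN False by simp
          qed
        qed
      qed
      have rp: "prefix (projt (\<zeta> @ [(u,v,l)]) r) (projt \<rho>' r)"
      proof (cases "r = u")
        case True then show ?thesis using pre_u by simp
      next
        case False
        show ?thesis
        proof (cases "r = v")
          case True then show ?thesis using vcase ur rN by simp
        next
          case False2: False
          then show ?thesis using sr False po[of r l] by (simp add: strict_prefix_def)
        qed
      qed
      have "\<mu> (\<zeta> @ [(u,v,l)]) < \<mu> \<zeta>" using mu_lt[OF True] by simp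
      then show ?thesis using reachB cmp' rp by blast
    next
      case False
      note nu = False
      show ?thesis
      proof (cases "unex \<zeta> v")
        case True
        obtain y R2 Q2 where b: "projt \<rho>' v = projt \<zeta> v @ y # R2" "proj H v Q2" "pstep Q2 y \<noteq> None"
          using nxt[OF True rz] by blast
        obtain l where l: "projt \<rho>' v = projt \<zeta> v @ In u l # R2" "l \<in> fst ` set bs"
          using recvlab[OF True b] by blast
        obtain B where B: "(l, B) \<in> set bs" using l(2) by auto
        have reachB: "reach G2 (\<zeta> @ [(u,v,l)]) B" using reach_snocI[OF rz[unfolded H] B] .
        have pre_v: "prefix (projt (\<zeta> @ [(u,v,l)]) v) (projt \<rho>' v)" using l(1) pv by (auto simp: prefix_def)
        have cmp': "Cmp (\<zeta> @ [(u,v,l)])"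
          unfolding Cmp_def
        proof
          fix t assume tN: "t \<in> N"
          show "cmpr (projt (\<zeta> @ [(u,v,l)]) t) (projt \<rho>' t)"
          proof (cases "t = v")
            case True then show ?thesis using pre_v by (simp add: cmpr_def)
          next
            case False
            show ?thesis
            proof (cases "t = u")
              case True then show ?thesis using ext[OF tN, of "(u,v,l)"] nu by simp
            next
              case False2: False then show ?thesis using oth tN False by simp
            qed
          qed
        qed
        have rp: "prefix (projt (\<zeta> @ [(u,v,l)]) r) (projt \<rho>' r)"
        proof (cases "r = v")
          case True then show ?thesis using pre_v by simp
        next
          case False
          have "r \<noteq> u" using nu ur by auto
          then show ?thesis using sr False po[of r l] by (simp add: strict_prefix_def)
        qed
        have "\<mu> (\<zeta> @ [(u,v,l)]) < \<mu> \<zeta>" using mu_lt[OF True] by simp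
        then show ?thesis using reachB cmp' rp by blast
      next
        case False
        note nv = False
        have ruv: "r \<notin> {u,v}" using nu nv ur by auto
        obtain l B where B: "(l, B) \<in> set bs" "rd r B < rd r H" using rd_step[OF rH H ruv] by blast
        have reachB: "reach G2 (\<zeta> @ [(u,v,l)]) B" using reach_snocI[OF rz[unfolded H] B(1)] .
        have cmp': "Cmp (\<zeta> @ [(u,v,l)])"
          unfolding Cmp_def
        proof
          fix t assume tN: "t \<in> N"
          show "cmpr (projt (\<zeta> @ [(u,v,l)]) t) (projt \<rho>' t)"
          proof (cases "t \<in> {u,v}")
            case True then show ?thesis using ext[OF tN, of "(u,v,l)"] nu nv by auto
          next
            case False then show ?thesis using oth tN by simp
          qed
        qed
        have rp: "prefix (projt (\<zeta> @ [(u,v,l)]) r) (projt \<rho>' r)"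
          using sr po[OF ruv, of l] by (simp add: strict_prefix_def)
        have "\<mu> (\<zeta> @ [(u,v,l)]) = \<mu> \<zeta>"
          unfolding \<mu>_def
        proof (rule sum.cong[OF refl])
          fix t assume t: "t \<in> partt \<rho>' \<inter> N"
          show "length (projt \<rho>' t) - length (projt (\<zeta> @ [(u,v,l)]) t) = length (projt \<rho>' t) - length (projt \<zeta> t)"
          proof (cases "t \<in> {u,v}")
            case True
            then have "prefix (projt \<rho>' t) (projt \<zeta> t)" using notunex[OF cz] t nu nv by auto
            then have "length (projt \<rho>' t) \<le> length (projt \<zeta> t)" by (rule prefix_length_le)
            then show ?thesis by simp
          next
            case False then show ?thesis using po by simp
          qed
        qed
        then show ?thesis using reachB cmp' rp B(2) by blast
      qed
    qed
  qed
  define Rel where "Rel = inv_image (less_than <*lex*> less_than) (\<lambda>(\<zeta>::('p,'l) trace, H::('p,'l) gty). (\<mu> \<zeta>, rd r H))"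
  have wfR: "wf Rel" unfolding Rel_def by (intro wf_inv_image wf_lex_prod wf_less_than)
  define Pr where "Pr = (\<lambda>x::('p,'l) trace \<times> ('p,'l) gty. reach G2 (fst x) (snd x) \<longrightarrow> Cmp (fst x) \<longrightarrow>
     strict_prefix (projt (fst x) r) (projt \<rho>' r) \<longrightarrow>
     (\<exists>\<rho>''. is_trace G2 \<rho>'' \<and> last \<rho>'' = \<alpha> \<and> projt \<rho>'' r = projt \<rho>' r \<and> Cmp \<rho>''))"
  have lastr: "projt \<rho>' r = projt (butlast \<rho>') r @ [act \<alpha> r]"
  proof -
    have "\<rho>' = butlast \<rho>' @ [\<alpha>]" using append_butlast_last_id[OF ne] la by simp
    then show ?thesis using ra by (metis projt_append projt_single)
  qed
  have main: "Pr x" for x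
  proof (induction x rule: wf_induct[OF wfR])
    case (1 x)
    obtain \<zeta> H where x: "x = (\<zeta>, H)" by (cases x)
    show ?case unfolding Pr_def x fst_conv snd_conv
    proof (intro impI)
      assume rz: "reach G2 \<zeta> H" and cz: "Cmp \<zeta>" and sr: "strict_prefix (projt \<zeta> r) (projt \<rho>' r)"
      obtain c B where s: "reach G2 (\<zeta> @ [c]) B" "Cmp (\<zeta> @ [c])" "prefix (projt (\<zeta> @ [c]) r) (projt \<rho>' r)"
        "\<mu> (\<zeta> @ [c]) < \<mu> \<zeta> \<or> (\<mu> (\<zeta> @ [c]) = \<mu> \<zeta> \<and> rd r B < rd r H)"
        using step[OF rz cz sr] by blast
      show "\<exists>\<rho>''. is_trace G2 \<rho>'' \<and> last \<rho>'' = \<alpha> \<and> projt \<rho>'' r = projt \<rho>' r \<and> Cmp \<rho>''"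
      proof (cases "projt (\<zeta> @ [c]) r = projt \<rho>' r")
        case True
        have "r \<in> partc c"
        proof (rule ccontr)
          assume "r \<notin> partc c"
          then have "projt (\<zeta> @ [c]) r = projt \<zeta> r" by (simp add: projt_single)
          then show False using True sr by (simp add: strict_prefix_def)
        qed
        then have "projt \<zeta> r @ [act c r] = projt (butlast \<rho>') r @ [act \<alpha> r]"
          using True lastr by (simp add: projt_single)
        then have "act c r = act \<alpha> r" by simp
        then have "c = \<alpha>" using act_inj \<open>r \<in> partc c\<close> ra by metis
        moreover have "is_trace G2 (\<zeta> @ [c])" using s(1) is_trace_reach by blast
        ultimately show ?thesis using True s(2) by auto
      next
        case False
        then have sr': "strict_prefix (projt (\<zeta> @ [c]) r) (projt \<rho>' r)" using s(3) by (simp add: strict_prefix_def)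
        have "((\<zeta> @ [c], B), x) \<in> Rel" unfolding Rel_def x using s(4) by auto
        then have "Pr (\<zeta> @ [c], B)" using 1 by blast
        then show ?thesis unfolding Pr_def using s(1,2) sr' by simp
      qed
    qed
  qed
  have "r \<in> partt \<rho>'" using ra la ne by (auto simp: partt_def)
  then have "projt \<rho>' r \<noteq> []" by (simp add: projt_empty_iff)
  then have sp0: "strict_prefix (projt [] r) (projt \<rho>' r)" by (simp add: strict_prefix_def)
  have c0: "Cmp []" unfolding Cmp_def cmpr_def by simp
  have "Pr ([], G2)" by (rule main)
  then have "\<exists>\<rho>''. is_trace G2 \<rho>'' \<and> last \<rho>'' = \<alpha> \<and> projt \<rho>'' r = projt \<rho>' r \<and> Cmp \<rho>''"
    unfolding Pr_def using reach_nil[of G2] sp0 c0 by simp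
  then show ?thesis unfolding Cmp_def .
qed



lemma cpre1: "cpre xs [c] = cpk UNIV xs (partc c) @ [c]"
  by (simp add: cpre_cpk)

lemma bl_last: "w \<noteq> [] \<Longrightarrow> last w = c \<Longrightarrow> butlast w @ [c] = w"
  using append_butlast_last_id by metis

lemma mem_projt: "e \<in> set w \<Longrightarrow> t \<in> partc e \<Longrightarrow> act e t \<in> set (projt w t)"
  by (induction w) (auto simp: projt_cons)

lemma split_at: "prefix (h @ [y]) (projt w s) \<Longrightarrow>
  \<exists>w0 c w1. w = w0 @ c # w1 \<and> projt w0 s = h \<and> s \<in> partc c \<and> act c s = y"
proof (induction w arbitrary: h)
  case Nil then show ?case by simp
next
  case (Cons e w)
  show ?case
  proof (cases "s \<in> partc e")
    case True
    then have pw: "projt (e # w) s = act e s # projt w s" by (simp add: projt_cons)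
    show ?thesis
    proof (cases h)
      case Nil
      then have "y = act e s" using Cons.prems pw by simp
      then show ?thesis using True Nil by (intro exI[of _ "[]"]) auto
    next
      case (Cons h0 h')
      then have "h0 = act e s" "prefix (h' @ [y]) (projt w s)" using Cons.prems pw by auto
      then obtain w0 c w1 where "w = w0 @ c # w1" "projt w0 s = h'" "s \<in> partc c" "act c s = y"
        using Cons.IH by blast
      then show ?thesis using True \<open>h0 = act e s\<close> Cons by (intro exI[of _ "e # w0"]) (auto simp: projt_cons)
    qed
  next
    case False
    then have "prefix (h @ [y]) (projt w s)" using Cons.prems by (simp add: projt_cons)
    then obtain w0 c w1 where "w = w0 @ c # w1" "projt w0 s = h" "s \<in> partc c" "act c s = y"
      using Cons.IH by blast
    then show ?thesis using False by (intro exI[of _ "e # w0"]) (auto simp: projt_cons)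
  qed
qed

lemma ev_last:
  assumes "ev \<rho> = cls (w @ [c])" "\<rho> \<noteq> []"
  shows "last \<rho> = c \<and> perm_eq (cpre (butlast \<rho>) [last \<rho>]) (w @ [c])"
proof -
  have pe: "perm_eq (cpre (butlast \<rho>) [last \<rho>]) (w @ [c])"
    using assms(1) unfolding ev_def by (rule cls_eqD)
  have "mx (cpre (butlast \<rho>) [last \<rho>]) = {last \<rho>}" by (simp add: cpre_mx)
  moreover have "c \<in> mx (w @ [c])" using mx_last[of "w @ [c]"] by simp
  ultimately have "last \<rho> = c" using perm_mx[OF pe] by simp
  then show ?thesis using pe by simp
qed

lemma cm_val:
  assumes "\<gamma> = ev \<rho>" "\<rho> \<noteq> []" "\<gamma> = cls (w @ [c])"
  shows "cm \<gamma> = c"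
proof -
  define E where "E = cpre (butlast \<rho>) [last \<rho>]"
  have lc: "last \<rho> = c" using ev_last assms by metis
  have pE: "pointed E" unfolding E_def by (rule pointed_cpre[OF pointed_single])
  have gE: "\<gamma> = cls E" using assms(1) unfolding ev_def E_def .
  have "E \<in> \<gamma>" unfolding gE cls_def by (simp add: perm_eq_refl)
  then have ex: "\<exists>\<sigma>. \<sigma> \<in> \<gamma> \<and> pointed \<sigma>" using pE by blast
  define \<tau> where "\<tau> = (SOME \<sigma>. \<sigma> \<in> \<gamma> \<and> pointed \<sigma>)"
  have t: "\<tau> \<in> \<gamma> \<and> pointed \<tau>" unfolding \<tau>_def using someI_ex[OF ex] .
  then have pe: "perm_eq E \<tau>" unfolding gE cls_def by simp
  have "\<tau> \<noteq> []" using t unfolding pointed_def by simp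
  then have "last \<tau> \<in> mx \<tau>" by (rule mx_last)
  moreover have "mx \<tau> = {last \<rho>}" using perm_mx[OF pe] unfolding E_def by (simp add: cpre_mx)
  ultimately have "last \<tau> = c" using lc by simp
  then show ?thesis unfolding cm_def \<tau>_def[symmetric] .
qed



theorem mainTheorem3:
  fixes G :: "('p, 'l) gty"
  assumes "wf_gty G" and "regular G" and "projectable G"
  shows "sem_projectable G"
  unfolding sem_projectable_def
proof (intro allI impI)
  fix \<gamma>1 \<gamma>2 \<sigma>1 \<alpha>1 r
  assume ic: "initial_conflict G \<gamma>1 \<gamma>2"
    and h: "cls (\<sigma>1 @ [\<alpha>1]) \<in> events G \<and> causal \<gamma>1 (cls (\<sigma>1 @ [\<alpha>1])) \<and> r \<in> partc \<alpha>1 - partc (cm \<gamma>1)"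
  have wfG: "wf_gty G" using assms(1) .
  obtain \<sigma> p q l1 l2 where icd: "l1 \<noteq> l2" "\<gamma>1 = cls (\<sigma> @ [(p, q, l1)])" "\<gamma>2 = cls (\<sigma> @ [(p, q, l2)])"
    "\<gamma>1 \<in> events G" "\<gamma>2 \<in> events G"
    using ic unfolding initial_conflict_def by blast
  define x1 where "x1 = (p, q, l1)"
  define x2 where "x2 = (p, q, l2)"
  have px: "partc x1 = {p,q}" "partc x2 = {p,q}" unfolding x1_def x2_def by auto
  obtain \<rho>a where ra: "is_trace G \<rho>a" "\<gamma>1 = ev \<rho>a" using icd(4) unfolding events_def Tr_def by blast
  obtain \<rho>b where rb: "is_trace G \<rho>b" "\<gamma>2 = ev \<rho>b" using icd(5) unfolding events_def Tr_def by blast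
  have rane: "\<rho>a \<noteq> []" using ra(1) is_trace_reach by blast
  have rbne: "\<rho>b \<noteq> []" using rb(1) is_trace_reach by blast
  have cm1: "cm \<gamma>1 = x1" using cm_val[OF ra(2) rane] icd(2) unfolding x1_def by blast
  have rD: "r \<in> partc \<alpha>1" "r \<notin> {p,q}" using h cm1 px by auto
  have "ev \<rho>a = cls (\<sigma> @ [x1])" using ra(2) icd(2) unfolding x1_def by simp
  then have ea: "last \<rho>a = x1 \<and> perm_eq (cpre (butlast \<rho>a) [last \<rho>a]) (\<sigma> @ [x1])"
    using rane by (rule ev_last)
  define EA where "EA = cpk UNIV (butlast \<rho>a) (partc x1)"
  have EAe: "\<forall>s. projt (EA @ [x1]) s = projt (\<sigma> @ [x1]) s"
    using perm_eq_projt ea unfolding EA_def by (metis cpre1)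
  have "ev \<rho>b = cls (\<sigma> @ [x2])" using rb(2) icd(3) unfolding x2_def by simp
  then have eb: "last \<rho>b = x2 \<and> perm_eq (cpre (butlast \<rho>b) [last \<rho>b]) (\<sigma> @ [x2])"
    using rbne by (rule ev_last)
  obtain \<rho>1 where r1: "is_trace G \<rho>1" "cls (\<sigma>1 @ [\<alpha>1]) = ev \<rho>1" using h unfolding events_def Tr_def by blast
  have r1ne: "\<rho>1 \<noteq> []" using r1(1) is_trace_reach by blast
  obtain \<tau> \<tau>' where tt: "\<gamma>1 = cls \<tau>" "cls (\<sigma>1 @ [\<alpha>1]) = cls (\<tau> @ \<tau>')" using h unfolding causal_def by blast
  have e1: "last \<rho>1 = \<alpha>1 \<and> perm_eq (cpre (butlast \<rho>1) [last \<rho>1]) (\<sigma>1 @ [\<alpha>1])"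
    using r1(2)[symmetric] r1ne by (rule ev_last)
  define K1 where "K1 = cpre (butlast \<rho>1) [\<alpha>1]"
  have K1s1: "perm_eq K1 (\<sigma>1 @ [\<alpha>1])" unfolding K1_def using conjunct2[OF e1] unfolding conjunct1[OF e1] .
  have pk: "perm_eq K1 (\<tau> @ \<tau>')" by (rule perm_eq_trans[OF K1s1 cls_eqD[OF tt(2)]])
  have "cls \<tau> = cls (\<sigma> @ [x1])" using tt(1) icd(2) unfolding x1_def by simp
  then have pt: "perm_eq \<tau> (\<sigma> @ [x1])" by (rule cls_eqD)
  have K1proj: "projt K1 s = projt (\<sigma> @ [x1]) s @ projt \<tau>' s" for s
  proof -
    have "projt K1 s = projt (\<tau> @ \<tau>') s" by (rule perm_eq_projt[OF pk])
    then show ?thesis using perm_eq_projt[OF pt, of s] by simp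
  qed
  have pre1: "prefix (projt (\<sigma> @ [x1]) s) (projt K1 s)" for s
    using K1proj by (simp add: prefix_def)
  have rho1eq: "\<rho>1 = butlast \<rho>1 @ [\<alpha>1]" using append_butlast_last_id[OF r1ne] e1 by simp
  have pre2: "prefix (projt K1 s) (projt \<rho>1 s)" for s
  proof -
    have "prefix (projt (cpk UNIV (butlast \<rho>1) (partc \<alpha>1) @ [\<alpha>1]) s) (projt (butlast \<rho>1 @ [\<alpha>1]) s)"
      by (rule cpk_prefix2) simp
    then show ?thesis unfolding K1_def cpre1 using rho1eq by simp
  qed
  have prer: "prefix (projt (\<sigma> @ [x1]) s) (projt \<rho>1 s)" for s
    by (rule prefix_order.trans[OF pre1 pre2])
  have "prefix (projt \<sigma> p @ [Out q l1]) (projt \<rho>1 p)"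
    using prer[of p] unfolding x1_def by (simp add: projt_single act_def)
  from split_at[OF this] obtain \<rho>0 c \<rho>' where sp: "\<rho>1 = \<rho>0 @ c # \<rho>'" "projt \<rho>0 p = projt \<sigma> p"
    "p \<in> partc c" "act c p = Out q l1" by blast
  have cx1: "c = x1" using act_Out[OF sp(3) sp(4)] unfolding x1_def .
  have r1d: "\<rho>1 = \<rho>0 @ x1 # \<rho>'" using sp(1) cx1 by simp
  have rpne: "\<rho>' \<noteq> []"
  proof
    assume "\<rho>' = []"
    then have "last \<rho>1 = x1" using r1d by simp
    then show False using e1 rD px by auto
  qed
  have lastp: "last \<rho>' = \<alpha>1" using e1 r1d rpne by simp
  have bl1: "butlast \<rho>1 = \<rho>0 @ x1 # butlast \<rho>'" using r1d rpne by (simp add: butlast_append)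
  (* x1 is in the causal past of alpha1 *)
  have dep1: "{p,q} \<inter> partt (cpre (butlast \<rho>') [\<alpha>1]) \<noteq> {}"
  proof
    assume nd: "{p,q} \<inter> partt (cpre (butlast \<rho>') [\<alpha>1]) = {}"
    define Y where "Y = cpre (butlast \<rho>') [\<alpha>1]"
    have "cpre (x1 # butlast \<rho>') [\<alpha>1] = Y" using nd px unfolding Y_def by (simp add: Let_def)
    then have "K1 = cpre \<rho>0 Y" unfolding K1_def bl1 using cpre_append[of \<rho>0 "x1 # butlast \<rho>'" "[\<alpha>1]"] by simp
    then have "K1 = cpk UNIV \<rho>0 (partt Y) @ Y" by (simp add: cpre_cpk)
    moreover have "projt Y p = []" using nd unfolding Y_def by (simp add: projt_empty_iff)
    ultimately have "projt K1 p = projt (cpk UNIV \<rho>0 (partt Y)) p" by simp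
    then have "length (projt K1 p) \<le> length (projt \<rho>0 p)" using cpk_prefix[of p UNIV \<rho>0 "partt Y"]
      by (simp add: prefix_length_le)
    moreover have "length (projt (\<sigma> @ [x1]) p) \<le> length (projt K1 p)" using pre1 prefix_length_le by blast
    ultimately show False using sp(2) px by (simp add: projt_single)
  qed
  have eqx1: "\<forall>t. projt (\<sigma> @ [x1]) t = projt (cpk UNIV \<rho>0 (partc x1) @ [x1]) t"
  proof -
    have a1: "p \<in> partc x1" "p \<in> (UNIV :: 'p set)" using px by auto
    have a2: "projt EA p = projt \<rho>0 p" using EAe[rule_format, of p] sp(2) by simp
    have a3: "\<forall>t\<in>UNIV. cmpr (projt (EA @ [x1]) t) (projt (\<rho>0 @ [x1]) t)"
    proof
      fix t :: 'p
      have "prefix (projt (EA @ [x1]) t) (projt \<rho>1 t)" using EAe prer by simp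
      moreover have "prefix (projt (\<rho>0 @ [x1]) t) (projt \<rho>1 t)" unfolding r1d
        by (rule prefix_projt) (simp add: prefix_def)
      ultimately show "cmpr (projt (EA @ [x1]) t) (projt (\<rho>0 @ [x1]) t)"
        unfolding cmpr_def using prefix_same_cases by blast
    qed
    have "\<forall>t\<in>UNIV. projt (cpk UNIV EA (partc x1) @ [x1]) t = projt (cpk UNIV \<rho>0 (partc x1) @ [x1]) t"
      by (rule eqpast[OF a1 a2 a3])
    moreover have "cpk UNIV EA (partc x1) = EA" unfolding EA_def by (rule cpk_idem)
    ultimately show ?thesis using EAe by simp
  qed
  define A0 where "A0 = cpk UNIV \<rho>0 {p,q}"
  have eqx2: "projt (\<sigma> @ [x2]) t = projt (cpre \<rho>0 [x2]) t" for t
  proof -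
    have "projt \<sigma> t @ projt [x1] t = projt A0 t @ projt [x1] t" using eqx1 px unfolding A0_def by simp
    then have "projt \<sigma> t = projt A0 t" by simp
    then show ?thesis unfolding cpre1 A0_def using px by simp
  qed
  obtain H1 where "reach G \<rho>1 H1" using r1(1) is_trace_reach by blast
  then obtain M where m: "reach G \<rho>0 M" "reach M (x1 # \<rho>') H1" unfolding r1d reach_append by blast
  from reach_Cons_inv[OF m(2)] obtain bs G1 where
    mM: "M = Com p q bs" "(l1, G1) \<in> set bs" "reach G1 \<rho>' H1" unfolding x1_def by blast
  have wfM: "wf_gty M" using wf_reach[OF m(1) wfG] .
  have wfbs: "bs \<noteq> []" "distinct (map fst bs)" "p \<noteq> q" "\<forall>b\<in>set bs. wf_gty (snd b)"
    using wf_Com[OF wfM[unfolded mM(1)]] by auto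
  obtain Pp where Pp: "proj G p Pp" using assms(3) unfolding projectable_def by blast
  obtain P1 where P1: "resid Pp (projt \<rho>0 p) = Some P1" "proj M p P1" using proj_reach[OF m(1) wfG Pp] by blast
  obtain cs where cs: "P1 = Send q cs" "list_all2 (\<lambda>b c. fst b = fst c \<and> proj (snd b) p (snd c)) bs cs"
    using proj_sender[OF wfM[unfolded mM(1)]] P1(2) mM(1) by blast
  have rbeq: "\<rho>b = butlast \<rho>b @ [x2]" using append_butlast_last_id[OF rbne] eb by simp
  obtain Hb where "reach G \<rho>b Hb" using rb(1) is_trace_reach by blast
  then have "reach G (butlast \<rho>b @ [x2]) Hb" using rbeq by simp
  from reach_snoc[OF this] obtain bs' where nb: "reach G (butlast \<rho>b) (Com p q bs')" "(l2, Hb) \<in> set bs'"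
    unfolding x2_def by blast
  have "projt (cpre (butlast \<rho>b) [x2]) p = projt (\<sigma> @ [x2]) p" using eb perm_eq_projt by metis
  then have pbp: "projt (butlast \<rho>b) p = projt \<rho>0 p" using cpre_keep[of p "[x2]" "butlast \<rho>b"] px sp(2) by simp
  obtain P1' where P1': "resid Pp (projt (butlast \<rho>b) p) = Some P1'" "proj (Com p q bs') p P1'"
    using proj_reach[OF nb(1) wfG Pp] by blast
  have "P1' = P1" using P1(1) P1'(1) pbp by simp
  have wfb': "wf_gty (Com p q bs')" using wf_reach[OF nb(1) wfG] .
  obtain cs' where cs': "P1' = Send q cs'" "list_all2 (\<lambda>b c. fst b = fst c \<and> proj (snd b) p (snd c)) bs' cs'"
    using proj_sender[OF wfb'] P1'(2) by blast
  have "cs = cs'" using cs(1) cs'(1) \<open>P1' = P1\<close> by simp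
  then have "map fst bs = map fst bs'" using la2_fst[OF cs(2)] la2_fst[OF cs'(2)] by simp
  then have "l2 \<in> fst ` set bs" using nb(2) by (metis fst_conv image_eqI set_map)
  then obtain G2 where G2: "(l2, G2) \<in> set bs" by auto
  have wfG1: "wf_gty G1" using wfbs(4) mM(2) by fastforce
  have wfG2: "wf_gty G2" using wfbs(4) G2 by fastforce
  define N where "N = - {p,q}"
  have common: "\<exists>P. proj G1 t P \<and> proj G2 t P" if tN: "t \<in> N" for t
  proof -
    obtain Pt0 where "proj G t Pt0" using assms(3) unfolding projectable_def by blast
    from proj_reach[OF m(1) wfG this] obtain P' where "proj M t P'" by blast
    then have pm: "proj (Com p q bs) t P'" using mM(1) by simp
    have tpq: "t \<notin> {p,q}" using tN unfolding N_def by simp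
    have "proj G1 t P'" by (rule proj_other[OF pm tpq mM(2)])
    moreover have "proj G2 t P'" by (rule proj_other[OF pm tpq G2])
    ultimately show ?thesis by blast
  qed
  define Pt where "Pt = (\<lambda>t. SOME P. proj G1 t P \<and> proj G2 t P)"
  have Pt: "proj G1 t (Pt t) \<and> proj G2 t (Pt t)" if "t \<in> N" for t
    unfolding Pt_def using someI_ex[OF common[OF that]] .
  have acc: "\<forall>t\<in>N. resid (Pt t) (projt \<rho>' t) \<noteq> None"
  proof
    fix t assume "t \<in> N"
    then have "proj G1 t (Pt t)" using Pt by blast
    from proj_reach[OF mM(3) wfG1 this] obtain P' where "resid (Pt t) (projt \<rho>' t) = Some P'" by blast
    then show "resid (Pt t) (projt \<rho>' t) \<noteq> None" by simp
  qed
  have PtN: "\<forall>t\<in>N. proj G2 t (Pt t)" using Pt by blast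
  have rN: "r \<in> N" using rD unfolding N_def by simp
  from cons_construct[OF wfG2 PtN acc rN rD(1) rpne lastp]
  obtain \<rho>'' where r2: "is_trace G2 \<rho>''" "last \<rho>'' = \<alpha>1" "projt \<rho>'' r = projt \<rho>' r"
    "\<forall>t\<in>N. cmpr (projt \<rho>'' t) (projt \<rho>' t)" by blast
  have r2ne: "\<rho>'' \<noteq> []" using r2(1) is_trace_reach by blast
  have r2eq: "butlast \<rho>'' @ [\<alpha>1] = \<rho>''" by (rule bl_last[OF r2ne r2(2)])
  have rpeq: "butlast \<rho>' @ [\<alpha>1] = \<rho>'" by (rule bl_last[OF rpne lastp])
  have rbl: "projt (butlast \<rho>') r = projt (butlast \<rho>'') r"
  proof -
    have "projt (butlast \<rho>' @ [\<alpha>1]) r = projt (butlast \<rho>'' @ [\<alpha>1]) r" unfolding r2eq rpeq using r2(3) by simp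
    then show ?thesis by simp
  qed
  have eqN: "\<forall>t\<in>N. projt (cpk N (butlast \<rho>') (partc \<alpha>1) @ [\<alpha>1]) t = projt (cpk N (butlast \<rho>'') (partc \<alpha>1) @ [\<alpha>1]) t"
  proof (rule eqpast[OF rD(1) rN rbl])
    show "\<forall>t\<in>N. cmpr (projt (butlast \<rho>' @ [\<alpha>1]) t) (projt (butlast \<rho>'' @ [\<alpha>1]) t)"
      unfolding r2eq rpeq using r2(4) cmpr_sym by blast
  qed
  (* x2 in the causal past of alpha1 in rho'' *)
  have dep2: "{p,q} \<inter> partt (cpre (butlast \<rho>'') [\<alpha>1]) \<noteq> {}"
  proof (cases "{p,q} \<inter> partc \<alpha>1 = {}")
    case False then show ?thesis by (simp add: cpre1) blast
  next
    case True
    have "{p,q} \<inter> partt (cpk UNIV (butlast \<rho>') (partc \<alpha>1)) \<noteq> {}"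
      using dep1 True by (simp add: cpre1)
    then have "{p,q} \<inter> partt (cpk (-{p,q}) (butlast \<rho>') (partc \<alpha>1)) \<noteq> {}"
      using cpk_DN[OF True] by blast
    then obtain e d where e: "e \<in> set (cpk N (butlast \<rho>') (partc \<alpha>1))" "d \<in> partc e" "d \<in> {p,q}"
      unfolding N_def by (auto simp: partt_def)
    obtain t where t: "t \<in> partc e" "t \<in> N" using cpk_S[OF e(1)] by blast
    have td: "t \<noteq> d" using t(2) e(3) unfolding N_def by auto
    have "act e t \<in> set (projt (cpk N (butlast \<rho>') (partc \<alpha>1) @ [\<alpha>1]) t)"
      using mem_projt[of e _ t] e(1) t(1) by simp
    then have "act e t \<in> set (projt (cpk N (butlast \<rho>'') (partc \<alpha>1) @ [\<alpha>1]) t)"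
      using eqN t(2) by simp
    then have "\<exists>e'\<in>set (cpk N (butlast \<rho>'') (partc \<alpha>1) @ [\<alpha>1]). t \<in> partc e' \<and> act e' t = act e t"
      by (rule act_in_proj)
    then obtain e' where e': "e' \<in> set (cpk N (butlast \<rho>'') (partc \<alpha>1) @ [\<alpha>1])" "t \<in> partc e'" "act e' t = act e t"
      by blast
    have "partner (act e t) = d" by (rule partner_act2[OF t(1) e(2) td])
    then have "d \<in> partc e'" using partner_act[OF e'(2)] e'(3) by simp
    then have "d \<in> partt (cpk N (butlast \<rho>'') (partc \<alpha>1) @ [\<alpha>1])" using e'(1) by (auto simp: partt_def)
    then have "d \<in> partt (cpk UNIV (butlast \<rho>'') (partc \<alpha>1) @ [\<alpha>1])" using partt_cpk_mono[of N "butlast \<rho>''" "partc \<alpha>1"] by auto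
    then show ?thesis using e(3) by (simp add: cpre1) blast
  qed
  define \<rho>2 where "\<rho>2 = \<rho>0 @ x2 # \<rho>''"
  obtain H2 where "reach G2 \<rho>'' H2" using r2(1) is_trace_reach by blast
  then have "reach M (x2 # \<rho>'') H2" unfolding mM(1) x2_def using G2 by (rule reach_cons[rotated])
  then have "reach G \<rho>2 H2" unfolding \<rho>2_def using m(1) reach_append by blast
  then have tr2: "is_trace G \<rho>2" unfolding is_trace_reach \<rho>2_def by blast
  have bl2: "butlast \<rho>2 = \<rho>0 @ x2 # butlast \<rho>''" unfolding \<rho>2_def using r2ne by (simp add: butlast_append)
  have last2: "last \<rho>2 = \<alpha>1" unfolding \<rho>2_def using r2ne r2(2) by simp
  define Z where "Z = cpre (butlast \<rho>'') [\<alpha>1]"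
  define K2 where "K2 = cpre (butlast \<rho>2) [\<alpha>1]"
  have "cpre (x2 # butlast \<rho>'') [\<alpha>1] = x2 # Z" using dep2 px unfolding Z_def by (simp add: Let_def)
  then have K2Z: "K2 = cpre \<rho>0 ([x2] @ Z)" unfolding K2_def bl2 using cpre_append[of \<rho>0 "x2 # butlast \<rho>''" "[\<alpha>1]"] by simp
  have preK2: "\<forall>s. prefix (projt (\<sigma> @ [x2]) s) (projt K2 s)"
  proof
    fix s
    show "prefix (projt (\<sigma> @ [x2]) s) (projt K2 s)" unfolding K2Z eqx2 by (rule cpre_mono)
  qed
  obtain v where "\<forall>s. projt K2 s = projt ((\<sigma> @ [x2]) @ v) s" using prefix_ext[OF preK2] by blast
  then have pK2: "perm_eq K2 ((\<sigma> @ [x2]) @ v)" by (rule peq_perm)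
  define \<sigma>2 where "\<sigma>2 = cpk UNIV (butlast \<rho>2) (partc \<alpha>1)"
  have K2s: "K2 = \<sigma>2 @ [\<alpha>1]" unfolding K2_def \<sigma>2_def by (rule cpre1)
  show "\<exists>\<sigma>2. cls (\<sigma>2 @ [\<alpha>1]) \<in> events G \<and> causal \<gamma>2 (cls (\<sigma>2 @ [\<alpha>1])) \<and> projt \<sigma>2 r = projt \<sigma>1 r"
  proof (intro exI conjI)
    have "ev \<rho>2 = cls K2" unfolding ev_def K2_def last2 ..
    then show "cls (\<sigma>2 @ [\<alpha>1]) \<in> events G" unfolding events_def Tr_def using tr2 K2s by auto
    have "cls (\<sigma>2 @ [\<alpha>1]) = cls ((\<sigma> @ [x2]) @ v)" using cls_eqI[OF pK2] K2s by simp
    then show "causal \<gamma>2 (cls (\<sigma>2 @ [\<alpha>1]))" unfolding causal_def using icd(3) unfolding x2_def by blast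
    have "projt \<sigma>2 r = projt (butlast \<rho>2) r" unfolding \<sigma>2_def using rD(1) by (simp add: cpk_keep)
    also have "\<dots> = projt \<rho>0 r @ projt (butlast \<rho>'') r" unfolding bl2 using rD px by (simp add: projt_cons)
    also have "\<dots> = projt \<rho>0 r @ projt (butlast \<rho>') r" using rbl by simp
    also have "\<dots> = projt (butlast \<rho>1) r" unfolding bl1 using rD px by (simp add: projt_cons)
    also have "\<dots> = projt \<sigma>1 r"
    proof -
      have "projt K1 r = projt (\<sigma>1 @ [\<alpha>1]) r" using perm_eq_projt[OF K1s1] .
      moreover have "projt K1 r = projt (butlast \<rho>1) r @ projt [\<alpha>1] r"
        unfolding K1_def using cpre_keep[of r "[\<alpha>1]"] rD(1) by simp
      ultimately show ?thesis by simp
    qed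
    finally show "projt \<sigma>2 r = projt \<sigma>1 r" .
  qed
qed


end
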